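(* Let $r\in(1,\infty)$ and let $m:G\to(0,\infty)$ be a $w$-moderate weight. Let $(x_i)_{i\in I}$ be a family in $G$ indexed by a countable set $I$, and let $\theta=(\theta_i)_{i\in I}$ be a family of positive numbers. Assume: (i) (weak Banach frame condition for $\mathrm{Co}(L_{r,m})$) the analysis map $A:\mathrm{Co}(L_{r,m})\to\ell_{r,\theta}(I)$, $A\varphi=\big(\langle\varphi,\pi(x_i)u\rangle_{\mathcal S_w}\big)_{i\in I}$, is well-defined and bounded, and there are constants $0<c\le C$ with $c\|\varphi\|_{\mathrm{Co}(L_{r,m})}\le\|A\varphi\|_{\ell_{r,\theta}}\le C\|\varphi\|_{\mathrm{Co}(L_{r,m})}$ for all $\varphi\in\mathrm{Co}(L_{r,m})$; (ii) (weak atomic decomposition condition for $\mathrm{Co}(L_{r',m^{-1}})$) for every $c=(c_i)_{i\in I}\in\ell_{r',\theta^{-1}}(I)$ the series $\sum_{i\in I}c_i\,\pi(x_i)u$ converges in $\mathrm{Co}(L_{r',m^{-1}})$, and the resulting synthesis map $S:\ell_{r',\theta^{-1}}(I)\to\mathrm{Co}(L_{r',m^{-1}})$, $Sc=\sum_{i\in I}c_i\,\pi(x_i)u$, is a well-defined bounded linear map. Then the right convolution operator $RC_K:f\mapsto f*K$ is a well-defined bounded linear operator on $L_{r,m}(G)$.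
   Context: Setting. $G$ is a locally compact, second countable group with left Haar measure (integrals written $\int_G f(x)\,dx$, $|E|$ denotes the Haar measure of $E$), identity $e$ and modular function $\Delta$. For measurable $f,g$: $(f*g)(x)=\int_G f(y)g(y^{-1}x)\,dy$ (where the integral exists), $\lambda(x)f(y)=f(x^{-1}y)$, $\langle f,g\rangle_{L_2}=\int_G f\overline g$. $w:G\to(0,\infty)$ is a fixed continuous weight with $w(xy)\le w(x)w(y)$ and $w(x)=w(x^{-1})$ for all $x,y$. For a weight $v>0$ and $p\in[1,\infty]$, $L_{p,v}(G)$ is the space of measurable $f$ with $\|f\|_{L_{p,v}}:=\|vf\|_{L_p}<\infty$; for a positive weight $\theta$ on a countable set $I$, $\ell_{p,\theta}(I)=\{c:(\theta_ic_i)_i\in\ell_p(I)\}$ with norm $\|(\theta_ic_i)\|_{\ell_p}$, and $\theta^{-1}=(\theta_i^{-1})_i$. A continuous $m:G\to(0,\infty)$ is $w$-moderate if $m(xy)\le w(x)m(y)$ and $m(xy)\le m(x)w(y)$ for all $x,y\in G$ (then $m^{-1}$ is $w$-moderate too). $\pi$ is a strongly continuous unitary representation of $G$ on a separable complex Hilbert space $\mathcal H$, and $u\in\mathcal H$ is such that $Vv(x)=\langle v,\pi(x)u\rangle_{\mathcal H}$ defines an isometry $V:\mathcal H\to L_2(G)$. $K(x)=\langle u,\pi(x)u\rangle_{\mathcal H}$ is the reproducing kernel (so $K*K=K$, $\overline{K(x)}=K(x^{-1})$). Standing assumption: $K\in L_{p,w}(G)$ for all $p\in(1,\infty)$. $\mathcal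 S_w=\{v\in\mathcal H: Vv\in L_{p,w}(G)\ \forall p\in(1,\infty)\}$, a Fréchet space under the seminorms $v\mapsto\|Vv\|_{L_{p,w}}$; $\mathcal S_w'$ is its anti-linear dual with pairing $\langle\cdot,\cdot\rangle_{\mathcal S_w}$, and $\mathcal H\hookrightarrow\mathcal S_w'$ canonically. The extended voice transform is $V_eT(x)=\langle T,\pi(x)u\rangle_{\mathcal S_w}$ for $T\in\mathcal S_w'$. For $r\in(1,\infty)$ and $w$-moderate $m$: $\mathrm{Co}(L_{r,m})=\{T\in\mathcal S_w':V_eT\in L_{r,m}(G)\}$ with norm $\|T\|_{\mathrm{Co}(L_{r,m})}=\|V_eT\|_{L_{r,m}}$ (a Banach space containing all $\pi(x)u$). $r'$ denotes the conjugate exponent, $1/r+1/r'=1$. *)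

theory Defs
  imports "HOL-Analysis.Analysis"
begin

definition lcsc_group_haar ::
  "('g::{t2_space,second_countable_topology} \<Rightarrow> 'g \<Rightarrow> 'g) \<Rightarrow> ('g \<Rightarrow> 'g) \<Rightarrow> 'g \<Rightarrow> 'g measure \<Rightarrow> bool"
  where "lcsc_group_haar gmult ginv e M \<longleftrightarrow>
    \<comment> \<open>group axioms\<close>
    (\<forall>x y z. gmult (gmult x y) z = gmult x (gmult y z)) \<and>
    (\<forall>x. gmult e x = x) \<and> (\<forall>x. gmult (ginv x) x = e) \<and>
    \<comment> \<open>topological group, locally compact (Hausdorff, second countable by the type class)\<close>
    continuous_on UNIV (\<lambda>p. gmult (fst p) (snd p)) \<and> continuous_on UNIV ginv \<and>
    locally_compact_space (euclidean :: 'g topology) \<and>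
    \<comment> \<open>left Haar measure\<close>
    sets M = sets borel \<and>
    (\<forall>x. \<forall>A\<in>sets M. emeasure M ((gmult x) ` A) = emeasure M A) \<and>
    (\<forall>C. compact C \<longrightarrow> emeasure M C < \<infinity>) \<and>
    (\<forall>U. open U \<and> U \<noteq> {} \<longrightarrow> 0 < emeasure M U)"

definition Lpw :: "'g measure \<Rightarrow> real \<Rightarrow> ('g \<Rightarrow> real) \<Rightarrow> ('g \<Rightarrow> complex) \<Rightarrow> bool"
  where "Lpw M p v f \<longleftrightarrow> f \<in> borel_measurable M \<and> integrable M (\<lambda>x. (v x * cmod (f x)) powr p)"

definition Lpw_norm :: "'g measure \<Rightarrow> real \<Rightarrow> ('g \<Rightarrow> real) \<Rightarrow> ('g \<Rightarrow> complex) \<Rightarrow> real"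
  where "Lpw_norm M p v f = (\<integral>x. (v x * cmod (f x)) powr p \<partial>M) powr (1 / p)"

definition ellw :: "'i set \<Rightarrow> real \<Rightarrow> ('i \<Rightarrow> real) \<Rightarrow> ('i \<Rightarrow> complex) \<Rightarrow> bool"
  where "ellw I p \<theta> c \<longleftrightarrow> (\<lambda>i. (\<theta> i * cmod (c i)) powr p) summable_on I"

definition ellw_norm :: "'i set \<Rightarrow> real \<Rightarrow> ('i \<Rightarrow> real) \<Rightarrow> ('i \<Rightarrow> complex) \<Rightarrow> real"
  where "ellw_norm I p \<theta> c = (\<Sum>\<^sub>\<infinity>i\<in>I. (\<theta> i * cmod (c i)) powr p) powr (1 / p)"

definition conv :: "'g measure \<Rightarrow> ('g \<Rightarrow> 'g \<Rightarrow> 'g) \<Rightarrow> ('g \<Rightarrow> 'g) \<Rightarrow> ('g \<Rightarrow> complex) \<Rightarrow> ('g \<Rightarrow> complex) \<Rightarrow> 'g \<Rightarrow> complex"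
  where "conv M gmult ginv f g = (\<lambda>x. \<integral>y. f y * g (gmult (ginv y) x) \<partial>M)"

definition submult_weight :: "('g \<Rightarrow> 'g \<Rightarrow> 'g) \<Rightarrow> ('g \<Rightarrow> 'g) \<Rightarrow> ('g::topological_space \<Rightarrow> real) \<Rightarrow> bool"
  where "submult_weight gmult ginv w \<longleftrightarrow> continuous_on UNIV w \<and> (\<forall>x. 0 < w x) \<and>
     (\<forall>x y. w (gmult x y) \<le> w x * w y) \<and> (\<forall>x. w x = w (ginv x))"

definition w_moderate :: "('g \<Rightarrow> 'g \<Rightarrow> 'g) \<Rightarrow> ('g::topological_space \<Rightarrow> real) \<Rightarrow> ('g \<Rightarrow> real) \<Rightarrow> bool"
  where "w_moderate gmult w m \<longleftrightarrow> continuous_on UNIV m \<and> (\<forall>x. 0 < m x) \<and>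
     (\<forall>x y. m (gmult x y) \<le> w x * m y \<and> m (gmult x y) \<le> m x * w y)"

text \<open>The carrier is a real Banach space; smul is the complex scalar multiplication
  (extending the real one) and ip the complex inner product, linear in the first and
  conjugate linear in the second argument, inducing the norm.\<close>

definition complex_hilbert ::
  "(complex \<Rightarrow> 'h::{real_normed_vector,banach} \<Rightarrow> 'h) \<Rightarrow> ('h \<Rightarrow> 'h \<Rightarrow> complex) \<Rightarrow> bool"
  where "complex_hilbert smul ip \<longleftrightarrow>
    (\<forall>a x y. smul a (x + y) = smul a x + smul a y) \<and>
    (\<forall>a b x. smul (a + b) x = smul a x + smul b x) \<and>
    (\<forall>a b x. smul (a * b) x = smul a (smul b x)) \<and>
    (\<forall>t x. smul (complex_of_real t) x = t *\<^sub>R x) \<and>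
    (\<forall>x y z. ip (x + y) z = ip x z + ip y z) \<and>
    (\<forall>a x y. ip (smul a x) y = a * ip x y) \<and>
    (\<forall>x y. ip y x = cnj (ip x y)) \<and>
    (\<forall>x. (norm x)\<^sup>2 = Re (ip x x)) \<and>
    (\<exists>D::'h set. countable D \<and> closure D = UNIV)"

definition strongly_cont_unitary_rep ::
  "('g \<Rightarrow> 'g \<Rightarrow> 'g) \<Rightarrow> 'g \<Rightarrow> (complex \<Rightarrow> 'h::{real_normed_vector,banach} \<Rightarrow> 'h) \<Rightarrow> ('h \<Rightarrow> 'h \<Rightarrow> complex)
    \<Rightarrow> ('g::topological_space \<Rightarrow> 'h \<Rightarrow> 'h) \<Rightarrow> bool"
  where "strongly_cont_unitary_rep gmult e smul ip rep \<longleftrightarrow>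
    (\<forall>x v v'. rep x (v + v') = rep x v + rep x v') \<and>
    (\<forall>x a v. rep x (smul a v) = smul a (rep x v)) \<and>
    (\<forall>x. bij (rep x)) \<and>
    (\<forall>x v v'. ip (rep x v) (rep x v') = ip v v') \<and>
    (\<forall>x y. rep (gmult x y) = rep x \<circ> rep y) \<and>
    rep e = id \<and>
    (\<forall>v. continuous_on UNIV (\<lambda>x. rep x v))"

definition voice :: "('h \<Rightarrow> 'h \<Rightarrow> complex) \<Rightarrow> ('g \<Rightarrow> 'h \<Rightarrow> 'h) \<Rightarrow> 'h \<Rightarrow> 'h \<Rightarrow> 'g \<Rightarrow> complex"
  where "voice ip rep u v = (\<lambda>x. ip v (rep x u))"

definition kernel :: "('h \<Rightarrow> 'h \<Rightarrow> complex) \<Rightarrow> ('g \<Rightarrow> 'h \<Rightarrow> 'h) \<Rightarrow> 'h \<Rightarrow> 'g \<Rightarrow> complex"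
  where "kernel ip rep u = (\<lambda>x. ip u (rep x u))"

definition Sw :: "'g measure \<Rightarrow> ('g \<Rightarrow> real) \<Rightarrow> ('h \<Rightarrow> 'h \<Rightarrow> complex) \<Rightarrow> ('g \<Rightarrow> 'h \<Rightarrow> 'h) \<Rightarrow> 'h \<Rightarrow> 'h set"
  where "Sw M w ip rep u = {v. \<forall>p>1. Lpw M p w (voice ip rep u v)}"

text \<open>Elements of the anti-dual are represented by their values on S_w (and 0 elsewhere).
  Continuity w.r.t. the Frechet topology given by the seminorms is expressed by a bound
  by finitely many of the seminorms.\<close>

definition Sw_dual :: "'g measure \<Rightarrow> ('g \<Rightarrow> real) \<Rightarrow> (complex \<Rightarrow> 'h::{real_normed_vector,banach} \<Rightarrow> 'h)
    \<Rightarrow> ('h \<Rightarrow> 'h \<Rightarrow> complex) \<Rightarrow> ('g \<Rightarrow> 'h \<Rightarrow> 'h) \<Rightarrow> 'h \<Rightarrow> ('h \<Rightarrow> complex) set"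
  where "Sw_dual M w smul ip rep u = {T.
    (\<forall>v\<in>Sw M w ip rep u. \<forall>v'\<in>Sw M w ip rep u. T (v + v') = T v + T v') \<and>
    (\<forall>a. \<forall>v\<in>Sw M w ip rep u. T (smul a v) = cnj a * T v) \<and>
    (\<forall>v. v \<notin> Sw M w ip rep u \<longrightarrow> T v = 0) \<and>
    (\<exists>P C. finite P \<and> P \<subseteq> {1<..} \<and>
       (\<forall>v\<in>Sw M w ip rep u. cmod (T v) \<le> C * (\<Sum>p\<in>P. Lpw_norm M p w (voice ip rep u v))))}"

definition embed :: "'g measure \<Rightarrow> ('g \<Rightarrow> real) \<Rightarrow> ('h \<Rightarrow> 'h \<Rightarrow> complex) \<Rightarrow> ('g \<Rightarrow> 'h \<Rightarrow> 'h) \<Rightarrow> 'h \<Rightarrow> 'h \<Rightarrow> ('h \<Rightarrow> complex)"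
  where "embed M w ip rep u h = (\<lambda>v. if v \<in> Sw M w ip rep u then ip h v else 0)"

definition ext_voice :: "('g \<Rightarrow> 'h \<Rightarrow> 'h) \<Rightarrow> 'h \<Rightarrow> ('h \<Rightarrow> complex) \<Rightarrow> 'g \<Rightarrow> complex"
  where "ext_voice rep u T = (\<lambda>x. T (rep x u))"

definition Co :: "'g measure \<Rightarrow> ('g \<Rightarrow> real) \<Rightarrow> (complex \<Rightarrow> 'h::{real_normed_vector,banach} \<Rightarrow> 'h)
    \<Rightarrow> ('h \<Rightarrow> 'h \<Rightarrow> complex) \<Rightarrow> ('g \<Rightarrow> 'h \<Rightarrow> 'h) \<Rightarrow> 'h \<Rightarrow> real \<Rightarrow> ('g \<Rightarrow> real) \<Rightarrow> ('h \<Rightarrow> complex) set"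
  where "Co M w smul ip rep u r m = {T \<in> Sw_dual M w smul ip rep u. Lpw M r m (ext_voice rep u T)}"

definition Co_norm :: "'g measure \<Rightarrow> ('g \<Rightarrow> 'h \<Rightarrow> 'h) \<Rightarrow> 'h \<Rightarrow> real \<Rightarrow> ('g \<Rightarrow> real) \<Rightarrow> ('h \<Rightarrow> complex) \<Rightarrow> real"
  where "Co_norm M rep u r m T = Lpw_norm M r m (ext_voice rep u T)"

definition coorbit_setting ::
  "('g::{t2_space,second_countable_topology} \<Rightarrow> 'g \<Rightarrow> 'g) \<Rightarrow> ('g \<Rightarrow> 'g) \<Rightarrow> 'g \<Rightarrow> 'g measure \<Rightarrow> ('g \<Rightarrow> real)
   \<Rightarrow> (complex \<Rightarrow> 'h::{real_normed_vector,banach} \<Rightarrow> 'h) \<Rightarrow> ('h \<Rightarrow> 'h \<Rightarrow> complex) \<Rightarrow> ('g \<Rightarrow> 'h \<Rightarrow> 'h) \<Rightarrow> 'h \<Rightarrow> bool"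
  where "coorbit_setting gmult ginv e M w smul ip rep u \<longleftrightarrow>
    lcsc_group_haar gmult ginv e M \<and>
    submult_weight gmult ginv w \<and>
    complex_hilbert smul ip \<and>
    strongly_cont_unitary_rep gmult e smul ip rep \<and>
    \<comment> \<open>V is an isometry H \<rightarrow> L_2(G)\<close>
    (\<forall>v. Lpw M 2 (\<lambda>_. 1) (voice ip rep u v) \<and> Lpw_norm M 2 (\<lambda>_. 1) (voice ip rep u v) = norm v) \<and>
    \<comment> \<open>standing assumption: K \<in> L_{p,w} for all 1 < p < \<infinity>\<close>
    (\<forall>p>1. Lpw M p w (kernel ip rep u))"

end

theory Submission
  imports Defs
begin


lemma holder:
  fixes f g :: "'a \<Rightarrow> real" and p q :: real
  assumes pq: "p > 1" "q > 1" "1/p + 1/q = 1"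
    and fm: "f \<in> borel_measurable M" and f0: "\<And>x. f x \<ge> 0" and fi: "integrable M (\<lambda>x. f x powr p)"
    and gm: "g \<in> borel_measurable M" and g0: "\<And>x. g x \<ge> 0" and gi: "integrable M (\<lambda>x. g x powr q)"
  shows "integrable M (\<lambda>x. f x * g x)"
    and "(\<integral>x. f x * g x \<partial>M) \<le> (\<integral>x. f x powr p \<partial>M) powr (1/p) * (\<integral>x. g x powr q \<partial>M) powr (1/q)"
proof -
  have Y: "f x * g x \<le> f x powr p / p + g x powr q / q" for x
    using Youngs_inequality[OF pq f0 g0] .
  show int: "integrable M (\<lambda>x. f x * g x)"
  proof (rule Bochner_Integration.integrable_bound)
    show "integrable M (\<lambda>x. f x powr p / p + g x powr q / q)" using fi gi by auto
    show "(\<lambda>x. f x * g x) \<in> borel_measurable M" using fm gm by auto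
    show "AE x in M. norm (f x * g x) \<le> norm (f x powr p / p + g x powr q / q)"
      using Y f0 g0 pq by (auto intro!: AE_I2 simp: abs_mult)
  qed
  define A where "A = (\<integral>x. f x powr p \<partial>M)"
  define B where "B = (\<integral>x. g x powr q \<partial>M)"
  have A0: "A \<ge> 0" unfolding A_def by (rule integral_nonneg_AE) auto
  have B0: "B \<ge> 0" unfolding B_def by (rule integral_nonneg_AE) auto
  show "(\<integral>x. f x * g x \<partial>M) \<le> A powr (1/p) * B powr (1/q)"
  proof (cases "A = 0 \<or> B = 0")
    case True
    have "AE x in M. f x * g x = 0"
    proof (cases "A = 0")
      case True
      then have "AE x in M. f x powr p = 0"
        using integral_nonneg_eq_0_iff_AE[OF fi] A_def by auto
      then show ?thesis by eventually_elim simp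
    next
      case False
      then have "B = 0" using \<open>A = 0 \<or> B = 0\<close> by auto
      then have "AE x in M. g x powr q = 0"
        using integral_nonneg_eq_0_iff_AE[OF gi] B_def by auto
      then show ?thesis by eventually_elim simp
    qed
    then have "(\<integral>x. f x * g x \<partial>M) = 0"
      by (simp add: integral_eq_zero_AE)
    then show ?thesis using A0 B0 by simp
  next
    case False
    then have Ap: "A > 0" and Bp: "B > 0" using A0 B0 by auto
    define a where "a = A powr (1/p)"
    define b where "b = B powr (1/q)"
    have ap: "a > 0" "b > 0" using Ap Bp by (auto simp: a_def b_def)
    have apA: "a powr p = A" using Ap pq by (simp add: a_def powr_powr)
    have bpB: "b powr q = B" using Bp pq by (simp add: b_def powr_powr)
    have pt: "f x * g x / (a * b) \<le> f x powr p / (p * A) + g x powr q / (q * B)" for x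
    proof -
      have "(f x / a) * (g x / b) \<le> (f x / a) powr p / p + (g x / b) powr q / q"
        using Youngs_inequality[OF pq, of "f x / a" "g x / b"] f0[of x] g0[of x] ap by simp
      also have "(f x / a) powr p = f x powr p / A"
        using f0 ap apA by (simp add: powr_divide)
      also have "(g x / b) powr q = g x powr q / B"
        using g0 ap bpB by (simp add: powr_divide)
      finally show ?thesis by (simp add: field_simps)
    qed
    have "(\<integral>x. f x * g x / (a * b) \<partial>M) \<le> (\<integral>x. f x powr p / (p * A) + g x powr q / (q * B) \<partial>M)"
      using int fi gi pt by (intro integral_mono) auto
    also have "\<dots> = A / (p * A) + B / (q * B)"
      using fi gi by (simp add: A_def B_def)
    also have "\<dots> = 1" using Ap Bp pq by simp
    finally have "(\<integral>x. f x * g x \<partial>M) / (a * b) \<le> 1" by simp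
    then show ?thesis using ap by (simp add: a_def b_def field_simps)
  qed
qed


lemma powr_add_le:
  fixes a b p :: real assumes "a \<ge> 0" "b \<ge> 0" "p > 0"
  shows "(a + b) powr p \<le> 2 powr p * (a powr p + b powr p)"
proof -
  have "(a + b) powr p \<le> (2 * max a b) powr p"
    using assms by (intro powr_mono2) auto
  also have "\<dots> = 2 powr p * max a b powr p" using assms by (simp add: powr_mult)
  also have "max a b powr p \<le> a powr p + b powr p"
    using assms by (cases "a \<le> b") (auto simp: max_def)
  finally show ?thesis using assms by (simp add: mult_left_mono)
qed

lemma Lpw_add:
  assumes "Lpw M p v f" "Lpw M p v g" "\<And>x. v x \<ge> 0" "p > 0" "v \<in> borel_measurable M"
  shows "Lpw M p v (\<lambda>x. f x + g x)"
  unfolding Lpw_def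
proof
  show m: "(\<lambda>x. f x + g x) \<in> borel_measurable M" using assms by (auto simp: Lpw_def)
  show "integrable M (\<lambda>x. (v x * cmod (f x + g x)) powr p)"
  proof (rule Bochner_Integration.integrable_bound)
    show "integrable M (\<lambda>x. 2 powr p * ((v x * cmod (f x)) powr p + (v x * cmod (g x)) powr p))"
      using assms by (auto simp: Lpw_def)
    show "(\<lambda>x. (v x * cmod (f x + g x)) powr p) \<in> borel_measurable M" using m assms by auto
    show "AE x in M. norm ((v x * cmod (f x + g x)) powr p)
        \<le> norm (2 powr p * ((v x * cmod (f x)) powr p + (v x * cmod (g x)) powr p))"
    proof (rule AE_I2)
      fix x
      have "(v x * cmod (f x + g x)) powr p \<le> (v x * cmod (f x) + v x * cmod (g x)) powr p"
        using assms(3)[of x] assms(4) by (intro powr_mono2) (auto simp: norm_triangle_ineq distrib_left[symmetric] mult_left_mono)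
      also have "\<dots> \<le> 2 powr p * ((v x * cmod (f x)) powr p + (v x * cmod (g x)) powr p)"
        using assms(3)[of x] assms(4) by (intro powr_add_le) auto
      finally show "norm ((v x * cmod (f x + g x)) powr p)
        \<le> norm (2 powr p * ((v x * cmod (f x)) powr p + (v x * cmod (g x)) powr p))" by simp
    qed
  qed
qed

lemma Lpw_cmult:
  assumes "Lpw M p v f" "\<And>x. v x \<ge> 0" "p > 0"
  shows "Lpw M p v (\<lambda>x. c * f x)"
proof -
  have "(\<lambda>x. (v x * cmod (c * f x)) powr p) = (\<lambda>x. cmod c powr p * (v x * cmod (f x)) powr p)"
    using assms by (auto simp: norm_mult powr_mult mult_ac)
  then show ?thesis using assms by (auto simp: Lpw_def)
qed

lemma Lpw_diff:
  assumes "Lpw M p v f" "Lpw M p v g" "\<And>x. v x \<ge> 0" "p > 0" "v \<in> borel_measurable M"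
  shows "Lpw M p v (\<lambda>x. f x - g x)"
  using Lpw_add[OF assms(1) Lpw_cmult[OF assms(2), of "-1"] assms(3-5)] assms(3,4) by simp

lemma Lpw_sum:
  assumes "\<And>i. i \<in> F \<Longrightarrow> Lpw M p v (f i)" "\<And>x. v x \<ge> 0" "p > 0" "v \<in> borel_measurable M"
  shows "Lpw M p v (\<lambda>x. \<Sum>i\<in>F. f i x)"
  using assms(1)
proof (induction F rule: infinite_finite_induct)
  case (infinite F) then show ?case by (simp add: Lpw_def)
next
  case empty then show ?case by (simp add: Lpw_def)
next
  case (insert i F)
  then have "Lpw M p v (\<lambda>x. f i x + (\<Sum>i\<in>F. f i x))"
    by (intro Lpw_add assms(2-4)) auto
  then show ?case using insert by simp
qed

lemma Lpw_mono:
  assumes "Lpw M p v f" "g \<in> borel_measurable M" "\<And>x. cmod (g x) \<le> cmod (f x)" "\<And>x. v x \<ge> 0" "p > 0"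
    "v \<in> borel_measurable M"
  shows "Lpw M p v g" "Lpw_norm M p v g \<le> Lpw_norm M p v f"
proof -
  have le: "(v x * cmod (g x)) powr p \<le> (v x * cmod (f x)) powr p" for x
    using assms(3)[of x] assms(4)[of x] assms(5) by (intro powr_mono2) (auto intro: mult_left_mono)
  have fi: "integrable M (\<lambda>x. (v x * cmod (f x)) powr p)" using assms(1) by (simp add: Lpw_def)
  have gm: "(\<lambda>x. (v x * cmod (g x)) powr p) \<in> borel_measurable M" using assms(2,6) by measurable
  have gi: "integrable M (\<lambda>x. (v x * cmod (g x)) powr p)"
  proof (rule Bochner_Integration.integrable_bound[OF fi gm])
    show "AE x in M. norm ((v x * cmod (g x)) powr p) \<le> norm ((v x * cmod (f x)) powr p)"
      using le by (intro AE_I2) simp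
  qed
  show L: "Lpw M p v g" using gi assms(2) by (simp add: Lpw_def)
  have "(\<integral>x. (v x * cmod (g x)) powr p \<partial>M) \<le> (\<integral>x. (v x * cmod (f x)) powr p \<partial>M)"
    using gi fi le by (rule integral_mono)
  moreover have "0 \<le> (\<integral>x. (v x * cmod (g x)) powr p \<partial>M)" by (rule integral_nonneg_AE) simp
  ultimately show "Lpw_norm M p v g \<le> Lpw_norm M p v f"
    unfolding Lpw_norm_def using assms(5) by (intro powr_mono2) auto
qed


locale grp =
  fixes gmult :: "'g::{t2_space,second_countable_topology} \<Rightarrow> 'g \<Rightarrow> 'g"
    and ginv :: "'g \<Rightarrow> 'g" and e :: 'g and M :: "'g measure"
  assumes haar: "lcsc_group_haar gmult ginv e M"
begin

lemma assoc: "gmult (gmult x y) z = gmult x (gmult y z)"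
  and lid: "gmult e x = x" and linv: "gmult (ginv x) x = e"
  and cont: "continuous_on UNIV (\<lambda>p. gmult (fst p) (snd p))"
  and cont_inv: "continuous_on UNIV ginv"
  and lc: "locally_compact_space (euclidean :: 'g topology)"
  and sets_M: "sets M = sets borel"
  and inv_meas: "\<And>x A. A \<in> sets M \<Longrightarrow> emeasure M ((gmult x) ` A) = emeasure M A"
  and compact_fin: "\<And>C. compact C \<Longrightarrow> emeasure M C < \<infinity>"
  using haar unfolding lcsc_group_haar_def by auto

lemma rinv: "gmult x (ginv x) = e"
proof -
  have "gmult x (ginv x) = gmult (gmult (ginv (ginv x)) (ginv x)) (gmult x (ginv x))"
    by (simp add: linv lid)
  also have "\<dots> = gmult (ginv (ginv x)) (gmult (gmult (ginv x) x) (ginv x))"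
    by (simp add: assoc)
  also have "\<dots> = e" by (simp add: linv lid)
  finally show ?thesis .
qed

lemma rid: "gmult x e = x"
proof -
  have "gmult x e = gmult x (gmult (ginv x) x)" by (simp add: linv)
  also have "\<dots> = gmult (gmult x (ginv x)) x" by (simp add: assoc)
  finally show ?thesis by (simp add: rinv lid)
qed

lemma cancel1: "gmult (ginv x) (gmult x y) = y"
  by (simp add: assoc[symmetric] linv lid)

lemma cancel2: "gmult x (gmult (ginv x) y) = y"
  by (simp add: assoc[symmetric] rinv lid)

lemma inv_inv: "ginv (ginv x) = x"
proof -
  have "ginv (ginv x) = gmult (ginv (ginv x)) (gmult (ginv x) x)" by (simp add: linv rid)
  also have "\<dots> = x" by (rule cancel1)
  finally show ?thesis .
qed

lemma inv_mult: "ginv (gmult x y) = gmult (ginv y) (ginv x)"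
proof -
  have "gmult (gmult x y) (gmult (ginv y) (ginv x)) = e"
    by (simp add: assoc cancel2 rinv)
  then have "gmult (ginv (gmult x y)) (gmult (gmult x y) (gmult (ginv y) (ginv x))) = ginv (gmult x y)"
    by (simp add: rid)
  then show ?thesis by (simp add: cancel1)
qed

lemma cont_mult_left: "continuous_on UNIV (gmult a)"
proof -
  have "continuous_on UNIV ((\<lambda>p. gmult (fst p) (snd p)) \<circ> (\<lambda>y. (a, y)))"
    by (intro continuous_on_compose continuous_intros continuous_on_subset[OF cont]) auto
  then show ?thesis by (simp add: o_def)
qed

lemma cont_mult_right: "continuous_on UNIV (\<lambda>y. gmult y a)"
proof -
  have "continuous_on UNIV ((\<lambda>p. gmult (fst p) (snd p)) \<circ> (\<lambda>y. (y, a)))"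
    by (intro continuous_on_compose continuous_intros continuous_on_subset[OF cont]) auto
  then show ?thesis by (simp add: o_def)
qed

lemma cont_pair: "continuous_on UNIV (\<lambda>p. gmult (ginv (snd p)) (fst p))"
proof -
  have "continuous_on UNIV ((\<lambda>p. gmult (fst p) (snd p)) \<circ> (\<lambda>p. (ginv (snd p), fst p)))"
    by (intro continuous_on_compose continuous_intros continuous_on_subset[OF cont]
        continuous_on_compose2[OF cont_inv]) auto
  then show ?thesis by (simp add: o_def)
qed

lemma meas_cong: "measurable M N = measurable borel N"
  by (rule measurable_cong_sets) (auto simp: sets_M)

lemma meas_mult_left[measurable]: "gmult a \<in> measurable M M"
  using borel_measurable_continuous_onI[OF cont_mult_left]
  by (simp add: meas_cong measurable_cong_sets[OF refl sets_M])

lemma meas_mult_right[measurable]: "(\<lambda>y. gmult y a) \<in> measurable M M"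
  using borel_measurable_continuous_onI[OF cont_mult_right]
  by (simp add: meas_cong measurable_cong_sets[OF refl sets_M])

lemma meas_inv[measurable]: "ginv \<in> measurable M M"
  using borel_measurable_continuous_onI[OF cont_inv]
  by (simp add: meas_cong measurable_cong_sets[OF refl sets_M])

lemma sets_MM: "sets (M \<Otimes>\<^sub>M M) = sets borel"
proof -
  have "sets (M \<Otimes>\<^sub>M M) = sets (borel \<Otimes>\<^sub>M borel)"
    by (intro sets_pair_measure_cong sets_M)
  then show ?thesis by (metis borel_prod)
qed

lemma meas_pair[measurable]: "(\<lambda>p. gmult (ginv (snd p)) (fst p)) \<in> measurable (M \<Otimes>\<^sub>M M) M"
proof -
  have "(\<lambda>p. gmult (ginv (snd p)) (fst p)) \<in> borel_measurable borel"
    by (rule borel_measurable_continuous_onI[OF cont_pair])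
  then show ?thesis
    by (simp add: measurable_cong_sets[OF sets_MM sets_M])
qed

lemma distr_left: "distr M M (gmult a) = M"
proof (rule measure_eqI)
  show "sets (distr M M (gmult a)) = sets M" by simp
  fix A assume "A \<in> sets (distr M M (gmult a))"
  then have A: "A \<in> sets M" by simp
  have "gmult a -` A \<inter> space M = gmult (ginv a) ` A"
  proof -
    have "space M = UNIV" using sets_M sets_eq_imp_space_eq by fastforce
    moreover have "gmult a -` A = gmult (ginv a) ` A"
    proof (intro set_eqI iffI)
      fix x assume "x \<in> gmult a -` A"
      then show "x \<in> gmult (ginv a) ` A"
        using cancel1[of a x] by (metis image_eqI vimageE)
    next
      fix x assume "x \<in> gmult (ginv a) ` A"
      then show "x \<in> gmult a -` A" using cancel2 by auto
    qed
    ultimately show ?thesis by simp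
  qed
  then show "emeasure (distr M M (gmult a)) A = emeasure M A"
    using A by (simp add: emeasure_distr inv_meas)
qed

lemma space_M: "space M = UNIV"
  using sets_M sets_eq_imp_space_eq by fastforce

lemma nn_integral_left: "f \<in> borel_measurable M \<Longrightarrow> (\<integral>\<^sup>+y. f (gmult a y) \<partial>M) = (\<integral>\<^sup>+y. f y \<partial>M)"
  using nn_integral_distr[of "gmult a" M M f] by (simp add: distr_left)

lemma integrable_left:
  fixes f :: "'g \<Rightarrow> 'b::{banach,second_countable_topology}"
  shows "f \<in> borel_measurable M \<Longrightarrow> integrable M (\<lambda>y. f (gmult a y)) \<longleftrightarrow> integrable M f"
  using integrable_distr_eq[of "gmult a" M M f] by (simp add: distr_left)

lemma integral_left:
  fixes f :: "'g \<Rightarrow> 'b::{banach,second_countable_topology}"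
  shows "f \<in> borel_measurable M \<Longrightarrow> (\<integral>y. f (gmult a y) \<partial>M) = (\<integral>y. f y \<partial>M)"
  using integral_distr[of "gmult a" M M f] by (simp add: distr_left)

lemma exhaustion:
  obtains C :: "nat \<Rightarrow> 'g set" where "\<And>n. compact (C n)" "incseq C" "(\<Union>n. C n) = UNIV"
proof -
  define \<U> where "\<U> = {U::'g set. open U \<and> (\<exists>K. compact K \<and> U \<subseteq> K)}"
  have cov: "\<Union>\<U> = UNIV"
  proof -
    { fix x :: 'g
      have "\<exists>U K. openin euclidean U \<and> compactin euclidean K \<and> x \<in> U \<and> U \<subseteq> K"
        using lc unfolding locally_compact_space_def by simp
      then obtain U K where UK: "openin euclidean U" "compactin euclidean K" "x \<in> U" "U \<subseteq> K"
        by blast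
      then have "open U" "compact K" using open_openin compactin_euclidean_iff by blast+
      then have "x \<in> \<Union>\<U>" unfolding \<U>_def using UK(3,4) by blast }
    then show ?thesis by blast
  qed
  have opn: "\<And>S. S \<in> \<U> \<Longrightarrow> openin (top_of_set UNIV) S" unfolding \<U>_def by simp
  then obtain \<U>' where U': "\<U>' \<subseteq> \<U>" "countable \<U>'" "\<Union>\<U>' = \<Union>\<U>"
    using Lindelof_openin[of \<U> UNIV, OF opn] by blast
  define Kf where "Kf U = (SOME K. compact K \<and> U \<subseteq> K)" for U :: "'g set"
  have Kf: "compact (Kf U) \<and> U \<subseteq> Kf U" if "U \<in> \<U>" for U
  proof -
    have "\<exists>K. compact K \<and> U \<subseteq> K" using that unfolding \<U>_def by blast
    then show ?thesis unfolding Kf_def by (rule someI_ex)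
  qed
  have ne: "\<U>' \<noteq> {}" using U'(3) cov by (metis Union_empty empty_not_UNIV)
  define C where "C n = (\<Union>k\<le>n. Kf (from_nat_into \<U>' k))" for n
  show ?thesis
  proof
    show "compact (C n)" for n
    proof -
      have "compact (Kf (from_nat_into \<U>' k))" for k
        using Kf[of "from_nat_into \<U>' k"] from_nat_into[OF ne, of k] U'(1) by blast
      then show ?thesis unfolding C_def by (intro compact_UN) auto
    qed
    show "incseq C" unfolding C_def by (intro monoI UN_mono) auto
    show "(\<Union>n. C n) = UNIV"
    proof -
      { fix x :: 'g
        have "x \<in> \<Union>\<U>'" using U'(3) cov by simp
        then obtain U where "U \<in> \<U>'" "x \<in> U" by (rule UnionE)
        then obtain k where k: "from_nat_into \<U>' k = U" using from_nat_into_surj[OF U'(2)] by blast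
        have "U \<subseteq> Kf U" using Kf[of U] \<open>U \<in> \<U>'\<close> U'(1) by blast
        then have "x \<in> Kf (from_nat_into \<U>' k)" using k \<open>x \<in> U\<close> by blast
        then have "x \<in> C k" unfolding C_def by blast
        then have "x \<in> (\<Union>n. C n)" by blast }
      then show ?thesis by blast
    qed
  qed
qed

lemma compact_sets: "compact C \<Longrightarrow> C \<in> sets M"
  by (metis borel_closed compact_imp_closed sets_M)

sublocale sigma_finite_measure M
proof
  obtain C :: "nat \<Rightarrow> 'g set" where C: "\<And>n. compact (C n)" "incseq C" "(\<Union>n. C n) = UNIV"
    using exhaustion by blast
  show "\<exists>A. countable A \<and> A \<subseteq> sets M \<and> \<Union> A = space M \<and> (\<forall>a\<in>A. emeasure M a \<noteq> \<infinity>)"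
  proof (intro exI[of _ "range C"] conjI)
    show "\<forall>a\<in>range C. emeasure M a \<noteq> \<infinity>"
    proof
      fix a assume "a \<in> range C"
      then obtain n where "a = C n" by blast
      then show "emeasure M a \<noteq> \<infinity>" using compact_fin[OF C(1)[of n]] by simp
    qed
    show "countable (range C)" by simp
    show "range C \<subseteq> sets M" using compact_sets C(1) by blast
    show "\<Union> (range C) = space M" using C(3) space_M by simp
  qed
qed

end


locale cs =
  fixes gmult :: "'g::{t2_space,second_countable_topology} \<Rightarrow> 'g \<Rightarrow> 'g"
    and ginv :: "'g \<Rightarrow> 'g" and e :: 'g and M :: "'g measure" and w :: "'g \<Rightarrow> real"
    and smul :: "complex \<Rightarrow> 'h::{real_normed_vector,banach} \<Rightarrow> 'h"
    and ip :: "'h \<Rightarrow> 'h \<Rightarrow> complex" and rep :: "'g \<Rightarrow> 'h \<Rightarrow> 'h" and u :: 'h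
  assumes setting: "coorbit_setting gmult ginv e M w smul ip rep u"
begin

sublocale grp gmult ginv e M
  using setting unfolding coorbit_setting_def by unfold_locales auto

abbreviation "K \<equiv> kernel ip rep u"

lemma w_props: "continuous_on UNIV w" "\<And>x. 0 < w x" "\<And>x y. w (gmult x y) \<le> w x * w y"
  "\<And>x. w x = w (ginv x)"
  using setting unfolding coorbit_setting_def submult_weight_def by auto

lemma hilb: "complex_hilbert smul ip" using setting unfolding coorbit_setting_def by auto

lemma ip_add_left: "ip (x + y) z = ip x z + ip y z"
  and ip_smul_left: "ip (smul a x) y = a * ip x y"
  and ip_cnj: "ip y x = cnj (ip x y)"
  and smul_real: "smul (complex_of_real t) x = t *\<^sub>R x"
  using hilb unfolding complex_hilbert_def by blast+

lemma ip_add_right: "ip z (x + y) = ip z x + ip z y"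
proof -
  have "ip z (x + y) = cnj (ip (x + y) z)" by (rule ip_cnj)
  also have "\<dots> = cnj (ip x z) + cnj (ip y z)" by (simp add: ip_add_left)
  also have "\<dots> = ip z x + ip z y" by (simp add: ip_cnj[of z x] ip_cnj[of z y])
  finally show ?thesis .
qed

lemma ip_zero_left: "ip 0 y = 0"
  using ip_add_left[of 0 0 y] by simp

lemma smul_zero: "smul 0 x = 0"
  using smul_real[of 0 x] by simp

lemma rep_props: "\<And>x v v'. rep x (v + v') = rep x v + rep x v'"
  "\<And>x v v'. ip (rep x v) (rep x v') = ip v v'"
  "\<And>x y. rep (gmult x y) = rep x \<circ> rep y" "rep e = id"
  using setting unfolding coorbit_setting_def strongly_cont_unitary_rep_def by auto

lemma ip_rep: "ip (rep x a) (rep y b) = ip a (rep (gmult (ginv x) y) b)"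
proof -
  have "rep y b = rep x (rep (gmult (ginv x) y) b)"
    using rep_props(3)[of x "gmult (ginv x) y"] by (simp add: cancel2)
  then show ?thesis using rep_props(2) by simp
qed

lemma K_inv: "K (ginv z) = cnj (K z)"
proof -
  have "ip (rep z u) (rep e u) = ip u (rep (ginv z) u)"
    using ip_rep[of z u e u] by (simp add: rid)
  then have "K (ginv z) = ip (rep z u) u" using rep_props(4) by (simp add: kernel_def)
  also have "\<dots> = cnj (K z)" by (simp add: kernel_def ip_cnj[of u])
  finally show ?thesis .
qed

lemma voice_rep: "voice ip rep u (rep x u) y = K (gmult (ginv x) y)"
  by (simp add: voice_def kernel_def ip_rep)

lemma K_swap: "K (gmult (ginv y) x) = cnj (K (gmult (ginv x) y))"
  using K_inv[of "gmult (ginv x) y"] by (simp add: inv_mult inv_inv)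

lemma w_ge1: "w x \<ge> 1"
proof -
  have we: "w e \<ge> 1"
    using w_props(3)[of e e] w_props(2)[of e] by (simp add: lid)
  have "w e \<le> w x * w x" using w_props(3)[of x "ginv x"] w_props(4)[of x] by (simp add: rinv)
  then have "1 \<le> w x * w x" using we by simp
  then show ?thesis using w_props(2)[of x]
    by (rule_tac ccontr) (use mult_strict_mono[of "w x" 1 "w x" 1] in auto)
qed

lemma w_meas[measurable]: "w \<in> borel_measurable M"
  using borel_measurable_continuous_onI[OF w_props(1)] by (simp add: meas_cong)

lemma K_Lp: "p > 1 \<Longrightarrow> Lpw M p w K"
  using setting unfolding coorbit_setting_def by auto

lemma K_meas[measurable]: "K \<in> borel_measurable M"
  using K_Lp[of 2] by (simp add: Lpw_def)

lemma w_shift: "w y \<le> w x * w (gmult (ginv x) y)"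
  using w_props(3)[of x "gmult (ginv x) y"] by (simp add: cancel2)

lemma K_shift_int:
  assumes p: "p > 1"
  shows "integrable M (\<lambda>y. (w (gmult (ginv x) y) * cmod (K (gmult (ginv x) y))) powr p)"
proof -
  have "integrable M (\<lambda>z. (w z * cmod (K z)) powr p)" using K_Lp[OF p] by (simp add: Lpw_def)
  moreover have "(\<lambda>z. (w z * cmod (K z)) powr p) \<in> borel_measurable M" by measurable
  ultimately show ?thesis
    using integrable_left[of "\<lambda>z. (w z * cmod (K z)) powr p" "ginv x"] by simp
qed

lemma rep_in_Sw: "rep x u \<in> Sw M w ip rep u"
  unfolding Sw_def
proof (intro CollectI allI impI)
  fix p :: real assume p: "p > 1"
  have vr: "voice ip rep u (rep x u) = (\<lambda>y. K (gmult (ginv x) y))" using voice_rep by auto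
  show "Lpw M p w (voice ip rep u (rep x u))"
    unfolding vr Lpw_def
  proof
    show "(\<lambda>y. K (gmult (ginv x) y)) \<in> borel_measurable M" by measurable
    show "integrable M (\<lambda>y. (w y * cmod (K (gmult (ginv x) y))) powr p)"
    proof (rule Bochner_Integration.integrable_bound)
      show "integrable M (\<lambda>y. w x powr p * (w (gmult (ginv x) y) * cmod (K (gmult (ginv x) y))) powr p)"
        using K_shift_int[OF p] by simp
      show "(\<lambda>y. (w y * cmod (K (gmult (ginv x) y))) powr p) \<in> borel_measurable M" by measurable
      show "AE y in M. norm ((w y * cmod (K (gmult (ginv x) y))) powr p)
          \<le> norm (w x powr p * (w (gmult (ginv x) y) * cmod (K (gmult (ginv x) y))) powr p)"
      proof (rule AE_I2)
        fix y
        have "(w y * cmod (K (gmult (ginv x) y))) powr p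
            \<le> (w x * (w (gmult (ginv x) y) * cmod (K (gmult (ginv x) y)))) powr p"
        proof (rule powr_mono2)
          show "0 \<le> w y * cmod (K (gmult (ginv x) y))" using w_props(2)[of y] by simp
          have "w y * cmod (K (gmult (ginv x) y)) \<le> (w x * w (gmult (ginv x) y)) * cmod (K (gmult (ginv x) y))"
            by (rule mult_right_mono[OF w_shift]) simp
          then show "w y * cmod (K (gmult (ginv x) y)) \<le> w x * (w (gmult (ginv x) y) * cmod (K (gmult (ginv x) y)))"
            by (simp add: mult.assoc)
        qed (use p in auto)
        also have "\<dots> = w x powr p * (w (gmult (ginv x) y) * cmod (K (gmult (ginv x) y))) powr p"
          using w_props(2)[of x] w_props(2)[of "gmult (ginv x) y"] by (simp add: powr_mult)
        finally show "norm ((w y * cmod (K (gmult (ginv x) y))) powr p)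
          \<le> norm (w x powr p * (w (gmult (ginv x) y) * cmod (K (gmult (ginv x) y))) powr p)"
          by simp
      qed
    qed
  qed
qed

end

locale csm = cs +
  fixes m
  assumes mod: "w_moderate gmult w m"
begin

lemma m_props: "continuous_on UNIV m" "\<And>x. 0 < m x" "\<And>x y. m (gmult x y) \<le> w x * m y"
  "\<And>x y. m (gmult x y) \<le> m x * w y"
  using mod unfolding w_moderate_def by auto

lemma m_meas[measurable]: "m \<in> borel_measurable M"
  using borel_measurable_continuous_onI[OF m_props(1)] by (simp add: meas_cong)

lemma minv_meas[measurable]: "(\<lambda>y. inverse (m y)) \<in> borel_measurable M"
  by (intro borel_measurable_inverse m_meas)

lemma minv_bound: "inverse (m y) \<le> w (gmult (ginv x) y) / m x"
proof -
  have "m x \<le> m y * w (gmult (ginv y) x)"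
    using m_props(4)[of y "gmult (ginv y) x"] by (simp add: cancel2)
  also have "w (gmult (ginv y) x) = w (gmult (ginv x) y)"
    using w_props(4)[of "gmult (ginv x) y"] by (simp add: inv_mult inv_inv)
  finally have "m x \<le> m y * w (gmult (ginv x) y)" .
  then show ?thesis using m_props(2)[of x] m_props(2)[of y]
    by (simp add: field_simps)
qed

lemma K_shift_minv:
  assumes q: "q > 1"
  shows "Lpw M q (\<lambda>y. inverse (m y)) (\<lambda>y. K (gmult (ginv x) y))"
    and "Lpw M q (\<lambda>y. inverse (m y)) (\<lambda>y. K (gmult (ginv y) x))"
proof -
  have bound: "AE y in M. norm ((inverse (m y) * cmod (g y)) powr q)
      \<le> norm ((1 / m x) powr q * (w (gmult (ginv x) y) * cmod (K (gmult (ginv x) y))) powr q)"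
    if gK: "\<And>y. cmod (g y) = cmod (K (gmult (ginv x) y))" for g
  proof (rule AE_I2)
    fix y
    have "(inverse (m y) * cmod (g y)) powr q
        \<le> (w (gmult (ginv x) y) / m x * cmod (K (gmult (ginv x) y))) powr q"
    proof (rule powr_mono2)
      show "0 \<le> inverse (m y) * cmod (g y)" using m_props(2)[of y] by simp
      have "inverse (m y) * cmod (g y) \<le> w (gmult (ginv x) y) / m x * cmod (g y)"
        using minv_bound[of y x] by (rule mult_right_mono) simp
      then show "inverse (m y) * cmod (g y) \<le> w (gmult (ginv x) y) / m x * cmod (K (gmult (ginv x) y))"
        using gK[of y] by simp
    qed (use q in auto)
    also have "\<dots> = (1 / m x) powr q * (w (gmult (ginv x) y) * cmod (K (gmult (ginv x) y))) powr q"
    proof -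
      have "w (gmult (ginv x) y) / m x * cmod (K (gmult (ginv x) y))
          = (1 / m x) * (w (gmult (ginv x) y) * cmod (K (gmult (ginv x) y)))" by simp
      moreover have "((1 / m x) * (w (gmult (ginv x) y) * cmod (K (gmult (ginv x) y)))) powr q
          = (1 / m x) powr q * (w (gmult (ginv x) y) * cmod (K (gmult (ginv x) y))) powr q"
        by (rule powr_mult)
      ultimately show ?thesis by simp
    qed
    finally show "norm ((inverse (m y) * cmod (g y)) powr q)
      \<le> norm ((1 / m x) powr q * (w (gmult (ginv x) y) * cmod (K (gmult (ginv x) y))) powr q)"
      by simp
  qed
  have int: "integrable M (\<lambda>y. (1 / m x) powr q * (w (gmult (ginv x) y) * cmod (K (gmult (ginv x) y))) powr q)"
    using K_shift_int[OF q] by (rule Bochner_Integration.integrable_mult_right)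
  show "Lpw M q (\<lambda>y. inverse (m y)) (\<lambda>y. K (gmult (ginv x) y))"
    unfolding Lpw_def
  proof
    show "(\<lambda>y. K (gmult (ginv x) y)) \<in> borel_measurable M" by measurable
    show "integrable M (\<lambda>y. (inverse (m y) * cmod (K (gmult (ginv x) y))) powr q)"
    proof (rule Bochner_Integration.integrable_bound[OF int])
      show "(\<lambda>y. (inverse (m y) * cmod (K (gmult (ginv x) y))) powr q) \<in> borel_measurable M"
        using minv_meas by (intro powr_real_measurable borel_measurable_times borel_measurable_norm) auto
      show "AE y in M. norm ((inverse (m y) * cmod (K (gmult (ginv x) y))) powr q)
      \<le> norm ((1 / m x) powr q * (w (gmult (ginv x) y) * cmod (K (gmult (ginv x) y))) powr q)"
        by (rule bound[of "\<lambda>y. K (gmult (ginv x) y)"]) simp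
    qed
  qed
  show "Lpw M q (\<lambda>y. inverse (m y)) (\<lambda>y. K (gmult (ginv y) x))"
    unfolding Lpw_def
  proof
    have "(\<lambda>y. gmult (ginv y) x) \<in> measurable M M"
      using measurable_comp[OF meas_inv meas_mult_right[of x]] by (simp add: o_def)
    then show m: "(\<lambda>y. K (gmult (ginv y) x)) \<in> borel_measurable M"
      by (rule measurable_compose) (rule K_meas)
    show "integrable M (\<lambda>y. (inverse (m y) * cmod (K (gmult (ginv y) x))) powr q)"
    proof (rule Bochner_Integration.integrable_bound[OF int])
      show "(\<lambda>y. (inverse (m y) * cmod (K (gmult (ginv y) x))) powr q) \<in> borel_measurable M"
        using m minv_meas by (intro powr_real_measurable borel_measurable_times borel_measurable_norm) auto
      show "AE y in M. norm ((inverse (m y) * cmod (K (gmult (ginv y) x))) powr q)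
      \<le> norm ((1 / m x) powr q * (w (gmult (ginv x) y) * cmod (K (gmult (ginv x) y))) powr q)"
        by (rule bound[of "\<lambda>y. K (gmult (ginv y) x)"]) (metis K_swap complex_mod_cnj)
    qed
  qed
qed

end


lemma holder_w:
  fixes f g :: "'a \<Rightarrow> complex"
  assumes pq: "p > 1" "q > 1" "1/p + 1/q = 1"
    and v: "\<And>x. v x > 0" "v \<in> borel_measurable M"
    and f: "Lpw M p v f" and g: "Lpw M q (\<lambda>x. inverse (v x)) g"
  shows "integrable M (\<lambda>x. f x * g x)"
    and "(\<integral>x. cmod (f x * g x) \<partial>M) \<le> Lpw_norm M p v f * Lpw_norm M q (\<lambda>x. inverse (v x)) g"
    and "cmod (\<integral>x. f x * g x \<partial>M) \<le> Lpw_norm M p v f * Lpw_norm M q (\<lambda>x. inverse (v x)) g"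
proof -
  define F where "F x = v x * cmod (f x)" for x
  define G where "G x = inverse (v x) * cmod (g x)" for x
  have FG: "F x * G x = cmod (f x * g x)" for x
    using v(1)[of x] by (simp add: F_def G_def norm_mult field_simps)
  have fm: "f \<in> borel_measurable M" and gm: "g \<in> borel_measurable M"
    using f g by (auto simp: Lpw_def)
  have H: "integrable M (\<lambda>x. F x * G x)"
    "(\<integral>x. F x * G x \<partial>M) \<le> (\<integral>x. F x powr p \<partial>M) powr (1/p) * (\<integral>x. G x powr q \<partial>M) powr (1/q)"
  proof -
    have Fm: "F \<in> borel_measurable M" unfolding F_def using fm v(2) by measurable
    have Gm: "G \<in> borel_measurable M" unfolding G_def using gm v(2)
      by (intro borel_measurable_times borel_measurable_inverse borel_measurable_norm) auto
    have F0: "F x \<ge> 0" for x using v(1)[of x] by (simp add: F_def)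
    have G0: "G x \<ge> 0" for x using v(1)[of x] by (simp add: G_def)
    have Fi: "integrable M (\<lambda>x. F x powr p)" using f by (simp add: Lpw_def F_def)
    have Gi: "integrable M (\<lambda>x. G x powr q)" using g by (simp add: Lpw_def G_def)
    show "integrable M (\<lambda>x. F x * G x)"
      "(\<integral>x. F x * G x \<partial>M) \<le> (\<integral>x. F x powr p \<partial>M) powr (1/p) * (\<integral>x. G x powr q \<partial>M) powr (1/q)"
      using holder[OF pq Fm F0 Fi Gm G0 Gi] by auto
  qed
  have fgm: "(\<lambda>x. f x * g x) \<in> borel_measurable M" using fm gm by measurable
  have ni: "integrable M (\<lambda>x. cmod (f x * g x))" using H(1) by (simp add: FG)
  show "integrable M (\<lambda>x. f x * g x)"
    using ni fgm integrable_norm_iff by blast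
  have eq: "(\<integral>x. F x powr p \<partial>M) powr (1/p) * (\<integral>x. G x powr q \<partial>M) powr (1/q)
      = Lpw_norm M p v f * Lpw_norm M q (\<lambda>x. inverse (v x)) g"
    by (simp add: Lpw_norm_def F_def G_def)
  show 2: "(\<integral>x. cmod (f x * g x) \<partial>M) \<le> Lpw_norm M p v f * Lpw_norm M q (\<lambda>x. inverse (v x)) g"
    using H(2) eq by (simp add: FG)
  show "cmod (\<integral>x. f x * g x \<partial>M) \<le> Lpw_norm M p v f * Lpw_norm M q (\<lambda>x. inverse (v x)) g"
    using integral_norm_bound[of M "\<lambda>x. f x * g x"] 2 by linarith
qed

lemma conj_exp:
  fixes r :: real assumes r: "r > 1"
  shows "r / (r - 1) > 1" "1 / r + 1 / (r / (r - 1)) = 1" "(r - 1) * (r / (r - 1)) = r"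
  using r by (auto simp: field_simps)

lemma Lpw_norm_nonneg: "Lpw_norm M p v f \<ge> 0"
  by (simp add: Lpw_norm_def)

context csm
begin

lemma inv_inv_m: "(\<lambda>x. inverse (inverse (m x))) = m" by simp

lemma conv_integrable:
  assumes r: "r > 1" and f: "Lpw M r m f"
  shows "integrable M (\<lambda>y. f y * K (gmult (ginv y) x))"
    and "cmod (conv M gmult ginv f K x) \<le> Lpw_norm M r m f * Lpw_norm M (r / (r - 1)) (\<lambda>y. inverse (m y)) (\<lambda>y. K (gmult (ginv y) x))"
proof -
  note q = conj_exp[OF r]
  have Kx: "Lpw M (r / (r - 1)) (\<lambda>y. inverse (m y)) (\<lambda>y. K (gmult (ginv y) x))"
    using K_shift_minv(2)[OF q(1)] .
  show "integrable M (\<lambda>y. f y * K (gmult (ginv y) x))"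
    using holder_w(1)[OF r q(1) q(2) m_props(2) m_meas f Kx] .
  show "cmod (conv M gmult ginv f K x) \<le> Lpw_norm M r m f * Lpw_norm M (r / (r - 1)) (\<lambda>y. inverse (m y)) (\<lambda>y. K (gmult (ginv y) x))"
    using holder_w(3)[OF r q(1) q(2) m_props(2) m_meas f Kx] by (simp add: conv_def)
qed

lemma conv_meas:
  assumes f: "f \<in> borel_measurable M"
  shows "conv M gmult ginv f K \<in> borel_measurable M"
proof -
  have "(\<lambda>p. f (snd p)) \<in> borel_measurable (M \<Otimes>\<^sub>M M)"
    using measurable_compose[OF measurable_snd f] .
  moreover have "(\<lambda>p. K (gmult (ginv (snd p)) (fst p))) \<in> borel_measurable (M \<Otimes>\<^sub>M M)"
    using measurable_compose[OF meas_pair K_meas] .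
  ultimately have "(\<lambda>p. f (snd p) * K (gmult (ginv (snd p)) (fst p))) \<in> borel_measurable (M \<Otimes>\<^sub>M M)"
    by (rule borel_measurable_times)
  then have "case_prod (\<lambda>x y. f y * K (gmult (ginv y) x)) \<in> borel_measurable (M \<Otimes>\<^sub>M M)"
    by (simp add: case_prod_beta')
  then show ?thesis
    unfolding conv_def by (rule borel_measurable_lebesgue_integral)
qed

end


context grp
begin

lemma meas_swap[measurable]: "(\<lambda>y. gmult (ginv y) x) \<in> measurable M M"
  using measurable_comp[OF meas_inv meas_mult_right[of x]] by (simp add: o_def)

lemma pair_sf: "pair_sigma_finite M M"
  by (simp add: pair_sigma_finite_def sigma_finite_measure_axioms)

end

context csm
begin

definition bK where "bK z = w z * cmod (K z)"

lemma bK_nonneg: "bK z \<ge> 0"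
  using w_props(2)[of z] by (simp add: bK_def)

lemma bK_meas[measurable]: "bK \<in> borel_measurable M"
  unfolding bK_def by measurable

lemma bK_swap: "bK (gmult (ginv y) x) = bK (gmult (ginv x) y)"
proof -
  have "w (gmult (ginv y) x) = w (ginv (gmult (ginv x) y))" by (simp add: inv_mult inv_inv)
  also have "\<dots> = w (gmult (ginv x) y)" using w_props(4)[of "gmult (ginv x) y"] by simp
  finally show ?thesis unfolding bK_def using K_swap[of y x] by simp
qed

lemma bK_int: "r > 1 \<Longrightarrow> integrable M (\<lambda>y. bK (gmult (ginv y) x) powr r)"
proof -
  assume r: "r > 1"
  have "(\<lambda>y. bK (gmult (ginv y) x) powr r) = (\<lambda>y. bK (gmult (ginv x) y) powr r)"
  proof
    fix y show "bK (gmult (ginv y) x) powr r = bK (gmult (ginv x) y) powr r"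
      using bK_swap[of y x] by simp
  qed
  then show ?thesis using K_shift_int[OF r, of x] by (simp add: bK_def)
qed

lemma bK_nn: "r > 1 \<Longrightarrow> (\<integral>\<^sup>+z. ennreal (bK z powr r) \<partial>M) < \<infinity>"
proof -
  assume r: "r > 1"
  have "integrable M (\<lambda>z. bK z powr r)" using K_Lp[OF r] by (simp add: Lpw_def bK_def)
  then show ?thesis by (simp add: nn_integral_eq_integral less_top[symmetric])
qed

lemma nice_Lpw:
  assumes r: "r > 1" and g: "g \<in> borel_measurable M" and C: "compact C" and N: "N \<ge> 0"
    and bd: "\<And>y. m y * cmod (g y) \<le> N * indicator C y"
  shows "Lpw M r m g"
  unfolding Lpw_def
proof
  show "g \<in> borel_measurable M" by fact
  show "integrable M (\<lambda>x. (m x * cmod (g x)) powr r)"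
  proof (rule Bochner_Integration.integrable_bound)
    show "integrable M (\<lambda>x. N powr r * indicator C x)"
      using compact_sets[OF C] compact_fin[OF C] by simp
    show "(\<lambda>x. (m x * cmod (g x)) powr r) \<in> borel_measurable M" using g by measurable
    show "AE x in M. norm ((m x * cmod (g x)) powr r) \<le> norm (N powr r * indicator C x)"
    proof (rule AE_I2)
      fix x
      have "(m x * cmod (g x)) powr r \<le> (N * indicator C x) powr r"
        using bd[of x] m_props(2)[of x] r by (intro powr_mono2) auto
      also have "\<dots> = N powr r * indicator C x" using N r by (simp split: split_indicator)
      finally show "norm ((m x * cmod (g x)) powr r) \<le> norm (N powr r * indicator C x)"
        using N by simp
    qed
  qed
qed

lemma young:
  assumes r: "r > 1" and g: "g \<in> borel_measurable M" and C: "compact C" and N: "N \<ge> 0"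
    and bd: "\<And>y. m y * cmod (g y) \<le> N * indicator C y"
  shows "Lpw M r m (conv M gmult ginv g K)"
proof -
  note q = conj_exp[OF r]
  define q where "q = r / (r - 1)"
  have q1: "q > 1" and qr: "1 / q + 1 / r = 1" and rq: "r / q = r - 1" using q r by (auto simp: q_def field_simps)
  have CS: "C \<in> sets M" using compact_sets[OF C] .
  have Cfin: "emeasure M C < \<infinity>" using compact_fin[OF C] .
  define \<mu> where "\<mu> = measure M C"
  have \<mu>0: "\<mu> \<ge> 0" by (simp add: \<mu>_def)
  define J where "J x = (\<integral>y. indicator C y * bK (gmult (ginv y) x) powr r \<partial>M)" for x
  have gL: "Lpw M r m g" using nice_Lpw[OF r g C N bd] .
  have Jint: "integrable M (\<lambda>y. indicator C y * bK (gmult (ginv y) x) powr r)" for x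
    using integrable_real_mult_indicator[OF CS bK_int[OF r, of x]] by (simp add: mult.commute)
  have J0: "J x \<ge> 0" for x unfolding J_def by (rule integral_nonneg_AE) (auto simp: bK_nonneg)
  have pw: "(m x * cmod (conv M gmult ginv g K x)) powr r \<le> (N * \<mu> powr (1/q)) powr r * J x" for x
  proof -
    have H: "integrable M (\<lambda>y. indicator C y * (indicator C y * bK (gmult (ginv y) x)))"
      "(\<integral>y. indicator C y * (indicator C y * bK (gmult (ginv y) x)) \<partial>M)
        \<le> (\<integral>y. indicator C y powr q \<partial>M) powr (1/q) * (\<integral>y. (indicator C y * bK (gmult (ginv y) x)) powr r \<partial>M) powr (1/r)"
    proof -
      have m1: "(indicator C :: 'a \<Rightarrow> real) \<in> borel_measurable M" using CS by simp
      have m2: "(\<lambda>y. indicator C y * bK (gmult (ginv y) x)) \<in> borel_measurable M" using CS by measurable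
      have i1: "integrable M (\<lambda>y. indicator C y powr q)"
      proof -
        have "(\<lambda>y. (indicator C y :: real) powr q) = indicator C" using q1
          by (auto simp: fun_eq_iff split: split_indicator)
        then show ?thesis using CS Cfin by simp
      qed
      have i2: "integrable M (\<lambda>y. (indicator C y * bK (gmult (ginv y) x)) powr r)"
      proof -
        have "(\<lambda>y. (indicator C y * bK (gmult (ginv y) x)) powr r)
            = (\<lambda>y. indicator C y * bK (gmult (ginv y) x) powr r)" using r
          by (auto simp: fun_eq_iff split: split_indicator)
        then show ?thesis using Jint by simp
      qed
      show "integrable M (\<lambda>y. indicator C y * (indicator C y * bK (gmult (ginv y) x)))"
        "(\<integral>y. indicator C y * (indicator C y * bK (gmult (ginv y) x)) \<partial>M)
        \<le> (\<integral>y. indicator C y powr q \<partial>M) powr (1/q) * (\<integral>y. (indicator C y * bK (gmult (ginv y) x)) powr r \<partial>M) powr (1/r)"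
        using holder[OF q1 r qr m1 _ i1 m2 _ i2] bK_nonneg by auto
    qed
    have ind2: "indicator C y * (indicator C y * bK (gmult (ginv y) x)) = indicator C y * bK (gmult (ginv y) x)" for y
      by (simp split: split_indicator)
    have e1: "(\<integral>y. indicator C y powr q \<partial>M) = \<mu>"
    proof -
      have "(\<lambda>y. (indicator C y :: real) powr q) = indicator C" using q1
        by (auto simp: fun_eq_iff split: split_indicator)
      then show ?thesis by (simp add: \<mu>_def space_M)
    qed
    have e2: "(\<integral>y. (indicator C y * bK (gmult (ginv y) x)) powr r \<partial>M) = J x"
    proof -
      have "(\<lambda>y. (indicator C y * bK (gmult (ginv y) x)) powr r)
          = (\<lambda>y. indicator C y * bK (gmult (ginv y) x) powr r)" using r
        by (auto simp: fun_eq_iff split: split_indicator)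
      then show ?thesis by (simp add: J_def)
    qed
    have Hi: "integrable M (\<lambda>y. indicator C y * bK (gmult (ginv y) x))" using H(1) ind2 by simp
    have Hb: "(\<integral>y. indicator C y * bK (gmult (ginv y) x) \<partial>M) \<le> \<mu> powr (1/q) * J x powr (1/r)"
      using H(2) ind2 e1 e2 by simp
    have gi: "integrable M (\<lambda>y. g y * K (gmult (ginv y) x))" using conv_integrable(1)[OF r gL] .
    have "m x * cmod (conv M gmult ginv g K x) \<le> m x * (\<integral>y. cmod (g y * K (gmult (ginv y) x)) \<partial>M)"
      using m_props(2)[of x] integral_norm_bound[of M "\<lambda>y. g y * K (gmult (ginv y) x)"]
      by (simp add: conv_def)
    also have "\<dots> = (\<integral>y. m x * cmod (g y * K (gmult (ginv y) x)) \<partial>M)" by simp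
    also have "\<dots> \<le> (\<integral>y. N * (indicator C y * bK (gmult (ginv y) x)) \<partial>M)"
    proof (rule integral_mono)
      show "integrable M (\<lambda>y. m x * cmod (g y * K (gmult (ginv y) x)))" using gi by simp
      show "integrable M (\<lambda>y. N * (indicator C y * bK (gmult (ginv y) x)))" using Hi by simp
      fix y
      have mx: "m x \<le> m y * w (gmult (ginv y) x)"
        using m_props(4)[of y "gmult (ginv y) x"] by (simp add: cancel2)
      have "m x * cmod (g y * K (gmult (ginv y) x)) \<le> (m y * w (gmult (ginv y) x)) * (cmod (g y) * cmod (K (gmult (ginv y) x)))"
        using mult_right_mono[OF mx, of "cmod (g y) * cmod (K (gmult (ginv y) x))"] by (simp add: norm_mult)
      also have "\<dots> = (m y * cmod (g y)) * bK (gmult (ginv y) x)" by (simp add: bK_def mult_ac)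
      also have "\<dots> \<le> (N * indicator C y) * bK (gmult (ginv y) x)"
        using bd[of y] bK_nonneg by (intro mult_right_mono) auto
      finally show "m x * cmod (g y * K (gmult (ginv y) x)) \<le> N * (indicator C y * bK (gmult (ginv y) x))"
        by (simp add: mult_ac)
    qed
    also have "\<dots> = N * (\<integral>y. indicator C y * bK (gmult (ginv y) x) \<partial>M)" by simp
    also have "\<dots> \<le> N * (\<mu> powr (1/q) * J x powr (1/r))" using Hb N by (rule mult_left_mono)
    finally have le: "m x * cmod (conv M gmult ginv g K x) \<le> (N * \<mu> powr (1/q)) * J x powr (1/r)"
      by (simp add: mult_ac)
    have "(m x * cmod (conv M gmult ginv g K x)) powr r \<le> ((N * \<mu> powr (1/q)) * J x powr (1/r)) powr r"
      using le m_props(2)[of x] r by (intro powr_mono2) auto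
    also have "\<dots> = (N * \<mu> powr (1/q)) powr r * J x"
      using J0[of x] r by (simp add: powr_mult powr_powr)
    finally show ?thesis .
  qed
  define c where "c = (N * \<mu> powr (1/q)) powr r"
  have c0: "c \<ge> 0" by (simp add: c_def)
  have Jm: "J \<in> borel_measurable M"
  proof -
    have "(\<lambda>p. indicator C (snd p) * bK (gmult (ginv (snd p)) (fst p)) powr r) \<in> borel_measurable (M \<Otimes>\<^sub>M M)"
      using CS by measurable
    then have "case_prod (\<lambda>x y. indicator C y * bK (gmult (ginv y) x) powr r) \<in> borel_measurable (M \<Otimes>\<^sub>M M)"
      by (simp add: case_prod_beta')
    then show ?thesis unfolding J_def by (rule borel_measurable_lebesgue_integral)
  qed
  have nnJ: "(\<integral>\<^sup>+x. ennreal (J x) \<partial>M) < \<infinity>"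
  proof -
    interpret P: pair_sigma_finite M M by (rule pair_sf)
    have "(\<integral>\<^sup>+x. ennreal (J x) \<partial>M) = (\<integral>\<^sup>+x. (\<integral>\<^sup>+y. ennreal (indicator C y * bK (gmult (ginv y) x) powr r) \<partial>M) \<partial>M)"
      unfolding J_def using Jint by (intro nn_integral_cong nn_integral_eq_integral[symmetric]) (auto simp: bK_nonneg)
    also have "\<dots> = (\<integral>\<^sup>+y. (\<integral>\<^sup>+x. ennreal (indicator C y * bK (gmult (ginv y) x) powr r) \<partial>M) \<partial>M)"
    proof (rule P.Fubini'[symmetric])
      have "(\<lambda>p. indicator C (snd p) * bK (gmult (ginv (snd p)) (fst p)) powr r) \<in> borel_measurable (M \<Otimes>\<^sub>M M)"
        using CS by measurable
      then show "case_prod (\<lambda>x y. ennreal (indicator C y * bK (gmult (ginv y) x) powr r)) \<in> borel_measurable (M \<Otimes>\<^sub>M M)"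
        by (simp add: case_prod_beta')
    qed
    also have "\<dots> = (\<integral>\<^sup>+y. ennreal (indicator C y) * (\<integral>\<^sup>+x. ennreal (bK (gmult (ginv y) x) powr r) \<partial>M) \<partial>M)"
    proof (rule nn_integral_cong)
      fix y
      have "(\<integral>\<^sup>+x. ennreal (indicator C y * bK (gmult (ginv y) x) powr r) \<partial>M)
          = (\<integral>\<^sup>+x. ennreal (indicator C y) * ennreal (bK (gmult (ginv y) x) powr r) \<partial>M)"
        by (simp add: ennreal_mult)
      also have "\<dots> = ennreal (indicator C y) * (\<integral>\<^sup>+x. ennreal (bK (gmult (ginv y) x) powr r) \<partial>M)"
        by (rule nn_integral_cmult) measurable
      finally show "(\<integral>\<^sup>+x. ennreal (indicator C y * bK (gmult (ginv y) x) powr r) \<partial>M)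
          = ennreal (indicator C y) * (\<integral>\<^sup>+x. ennreal (bK (gmult (ginv y) x) powr r) \<partial>M)" .
    qed
    also have "\<dots> = (\<integral>\<^sup>+y. ennreal (indicator C y) * (\<integral>\<^sup>+z. ennreal (bK z powr r) \<partial>M) \<partial>M)"
    proof (rule nn_integral_cong)
      fix y
      have "(\<integral>\<^sup>+x. ennreal (bK (gmult (ginv y) x) powr r) \<partial>M) = (\<integral>\<^sup>+z. ennreal (bK z powr r) \<partial>M)"
        by (rule nn_integral_left[of "\<lambda>z. ennreal (bK z powr r)" "ginv y"]) measurable
      then show "ennreal (indicator C y) * (\<integral>\<^sup>+x. ennreal (bK (gmult (ginv y) x) powr r) \<partial>M)
          = ennreal (indicator C y) * (\<integral>\<^sup>+z. ennreal (bK z powr r) \<partial>M)" by simp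
    qed
    also have "\<dots> = (\<integral>\<^sup>+z. ennreal (bK z powr r) \<partial>M) * emeasure M C"
      using nn_integral_cmult_indicator[OF CS, of "\<integral>\<^sup>+z. ennreal (bK z powr r) \<partial>M"]
      by (simp add: ennreal_indicator mult.commute)
    also have "\<dots> < \<infinity>" using bK_nn[OF r] Cfin by (simp add: ennreal_mult_less_top less_top)
    finally show ?thesis .
  qed
  have cm: "(\<lambda>x. (m x * cmod (conv M gmult ginv g K x)) powr r) \<in> borel_measurable M"
    using conv_meas[OF g] by measurable
  have "(\<integral>\<^sup>+x. ennreal ((m x * cmod (conv M gmult ginv g K x)) powr r) \<partial>M) \<le> (\<integral>\<^sup>+x. ennreal c * ennreal (J x) \<partial>M)"
    using pw c0 J0 by (intro nn_integral_mono) (auto simp: c_def ennreal_mult[symmetric])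
  also have "\<dots> = ennreal c * (\<integral>\<^sup>+x. ennreal (J x) \<partial>M)" using Jm by (intro nn_integral_cmult) measurable
  also have "\<dots> < \<infinity>" using nnJ by (simp add: ennreal_mult_less_top less_top)
  finally have fin: "(\<integral>\<^sup>+x. ennreal ((m x * cmod (conv M gmult ginv g K x)) powr r) \<partial>M) < \<infinity>" .
  show ?thesis unfolding Lpw_def
  proof
    show "conv M gmult ginv g K \<in> borel_measurable M" using conv_meas[OF g] .
    show "integrable M (\<lambda>x. (m x * cmod (conv M gmult ginv g K x)) powr r)"
      using cm fin by (intro integrableI_nonneg) auto
  qed
qed

end


context csm
begin

definition nice :: "('a \<Rightarrow> complex) \<Rightarrow> bool" where
  "nice g \<longleftrightarrow> g \<in> borel_measurable M \<and> (\<exists>C N. compact C \<and> N \<ge> 0 \<and>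
     (\<forall>y. cmod (g y) \<le> N * indicator C y) \<and> (\<forall>y. m y * cmod (g y) \<le> N * indicator C y))"

lemma bounded_Lpw:
  assumes p: "p > 0" and g: "g \<in> borel_measurable M" and C: "compact C" and N: "N \<ge> 0"
    and bd: "\<And>y. cmod (g y) \<le> N * indicator C y"
    and v: "\<And>y. 0 \<le> v y" "\<And>y. v y \<le> 1" "v \<in> borel_measurable M"
  shows "Lpw M p v g"
  unfolding Lpw_def
proof
  show "g \<in> borel_measurable M" by fact
  show "integrable M (\<lambda>x. (v x * cmod (g x)) powr p)"
  proof (rule Bochner_Integration.integrable_bound)
    show "integrable M (\<lambda>x. N powr p * indicator C x)"
      using compact_sets[OF C] compact_fin[OF C] by simp
    show "(\<lambda>x. (v x * cmod (g x)) powr p) \<in> borel_measurable M" using g v(3) by measurable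
    show "AE x in M. norm ((v x * cmod (g x)) powr p) \<le> norm (N powr p * indicator C x)"
    proof (rule AE_I2)
      fix x
      have "v x * cmod (g x) \<le> 1 * cmod (g x)" using v(2)[of x] by (intro mult_right_mono) auto
      also have "\<dots> \<le> N * indicator C x" using bd[of x] by simp
      finally have "(v x * cmod (g x)) powr p \<le> (N * indicator C x) powr p"
        using v(1)[of x] p by (intro powr_mono2) auto
      also have "\<dots> = N powr p * indicator C x" using N p by (simp split: split_indicator)
      finally show "norm ((v x * cmod (g x)) powr p) \<le> norm (N powr p * indicator C x)"
        using N by simp
    qed
  qed
qed

abbreviation "SW \<equiv> Sw M w ip rep u"

definition T where
  "T g = (\<lambda>v. if v \<in> SW then (\<integral>y. g y * cnj (voice ip rep u v y) \<partial>M) else 0)"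

lemma voice_add: "voice ip rep u (v + v') = (\<lambda>y. voice ip rep u v y + voice ip rep u v' y)"
  by (simp add: voice_def ip_add_left)

lemma voice_smul: "voice ip rep u (smul a v) = (\<lambda>y. a * voice ip rep u v y)"
  by (simp add: voice_def ip_smul_left)

lemma w_inv_props: "\<And>y. 0 \<le> inverse (w y)" "\<And>y. inverse (w y) \<le> 1"
  "(\<lambda>y. inverse (w y)) \<in> borel_measurable M"
proof -
  show "0 \<le> inverse (w y)" for y using w_props(2)[of y] by simp
  show "inverse (w y) \<le> 1" for y using w_ge1[of y] by (simp add: inverse_le_1_iff)
  show "(\<lambda>y. inverse (w y)) \<in> borel_measurable M" by (intro borel_measurable_inverse w_meas)
qed

lemma w_nonneg: "0 \<le> w y" using w_props(2)[of y] by simp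

lemma Sw_add: "v \<in> SW \<Longrightarrow> v' \<in> SW \<Longrightarrow> v + v' \<in> SW"
proof -
  assume v: "v \<in> SW" and v': "v' \<in> SW"
  { fix p :: real assume p: "p > 1"
    have "Lpw M p w (\<lambda>y. voice ip rep u v y + voice ip rep u v' y)"
      using v v' p by (intro Lpw_add w_meas w_nonneg) (auto simp: Sw_def)
    then have "Lpw M p w (voice ip rep u (v + v'))" by (simp add: voice_add) }
  then show ?thesis by (simp add: Sw_def)
qed

lemma Sw_smul: "v \<in> SW \<Longrightarrow> smul a v \<in> SW"
proof -
  assume v: "v \<in> SW"
  { fix p :: real assume p: "p > 1"
    have "Lpw M p w (\<lambda>y. a * voice ip rep u v y)"
      using v p by (intro Lpw_cmult w_nonneg) (auto simp: Sw_def)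
    then have "Lpw M p w (voice ip rep u (smul a v))" by (simp add: voice_smul) }
  then show ?thesis by (simp add: Sw_def)
qed

lemma Sw_voice: "v \<in> SW \<Longrightarrow> Lpw M 2 w (voice ip rep u v)"
  unfolding Sw_def by auto

lemma meas_cnj: "f \<in> borel_measurable N \<Longrightarrow> (\<lambda>y. cnj (f y)) \<in> borel_measurable N"
proof -
  assume f: "f \<in> borel_measurable N"
  have "cnj \<in> borel_measurable borel"
    using borel_measurable_continuous_onI[OF continuous_on_cnj[OF continuous_on_id]] by simp
  then show ?thesis using measurable_compose[OF f] by blast
qed

lemma cnj_Lpw: "Lpw M p v f \<Longrightarrow> Lpw M p v (\<lambda>y. cnj (f y))"
  "Lpw_norm M p v (\<lambda>y. cnj (f y)) = Lpw_norm M p v f"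
  by (auto simp: Lpw_def Lpw_norm_def intro: meas_cnj)

lemma T_facts:
  assumes g: "g \<in> borel_measurable M" and C: "compact C" and N: "N \<ge> 0"
    and bd: "\<And>y. cmod (g y) \<le> N * indicator C y"
    and v: "v \<in> SW"
  shows "integrable M (\<lambda>y. g y * cnj (voice ip rep u v y))"
    and "cmod (T g v) \<le> Lpw_norm M 2 (\<lambda>y. inverse (w y)) g * Lpw_norm M 2 w (voice ip rep u v)"
proof -
  have gL: "Lpw M 2 (\<lambda>y. inverse (w y)) g"
    using bounded_Lpw[of 2 g C N "\<lambda>y. inverse (w y)"] g C N bd w_inv_props by auto
  have vL: "Lpw M 2 (\<lambda>y. inverse (inverse (w y))) (\<lambda>y. cnj (voice ip rep u v y))"
    using cnj_Lpw(1)[OF Sw_voice[OF v]] by simp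
  have wp: "\<And>y. 0 < inverse (w y)" using w_props(2) by simp
  note H = holder_w[of 2 2 "\<lambda>y. inverse (w y)" M g "\<lambda>y. cnj (voice ip rep u v y)", OF _ _ _ wp w_inv_props(3) gL vL]
  show "integrable M (\<lambda>y. g y * cnj (voice ip rep u v y))" using H(1) by simp
  show "cmod (T g v) \<le> Lpw_norm M 2 (\<lambda>y. inverse (w y)) g * Lpw_norm M 2 w (voice ip rep u v)"
    using H(3) v by (simp add: T_def cnj_Lpw(2))
qed

lemma T_dual:
  assumes g: "g \<in> borel_measurable M" and C: "compact C" and N: "N \<ge> 0"
    and bd: "\<And>y. cmod (g y) \<le> N * indicator C y"
  shows "T g \<in> Sw_dual M w smul ip rep u"
  unfolding Sw_dual_def
proof (intro CollectI conjI ballI allI impI)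
  fix v v' assume v: "v \<in> SW" and v': "v' \<in> SW"
  have i1: "integrable M (\<lambda>y. g y * cnj (voice ip rep u v y))" using T_facts(1)[OF g C N bd v] .
  have i2: "integrable M (\<lambda>y. g y * cnj (voice ip rep u v' y))" using T_facts(1)[OF g C N bd v'] .
  have "T g (v + v') = (\<integral>y. g y * cnj (voice ip rep u v y) + g y * cnj (voice ip rep u v' y) \<partial>M)"
    using Sw_add[OF v v'] by (simp add: T_def voice_add distrib_left)
  also have "\<dots> = T g v + T g v'" using i1 i2 v v' by (simp add: T_def)
  finally show "T g (v + v') = T g v + T g v'" .
next
  fix a v assume v: "v \<in> SW"
  have "T g (smul a v) = (\<integral>y. cnj a * (g y * cnj (voice ip rep u v y)) \<partial>M)"
    using Sw_smul[OF v] by (simp add: T_def voice_smul mult_ac)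
  also have "\<dots> = cnj a * T g v" using v by (simp add: T_def)
  finally show "T g (smul a v) = cnj a * T g v" .
next
  fix v assume "v \<notin> SW" then show "T g v = 0" by (simp add: T_def)
next
  show "\<exists>P C. finite P \<and> P \<subseteq> {1<..} \<and>
       (\<forall>v\<in>SW. cmod (T g v) \<le> C * (\<Sum>p\<in>P. Lpw_norm M p w (voice ip rep u v)))"
    using T_facts(2)[OF g C N bd]
    by (intro exI[of _ "{2}"] exI[of _ "Lpw_norm M 2 (\<lambda>y. inverse (w y)) g"]) auto
qed

lemma T_ext_voice: "ext_voice rep u (T g) = conv M gmult ginv g K"
proof
  fix x
  have "ext_voice rep u (T g) x = (\<integral>y. g y * cnj (voice ip rep u (rep x u) y) \<partial>M)"
    using rep_in_Sw[of x] by (simp add: ext_voice_def T_def)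
  also have "\<dots> = (\<integral>y. g y * K (gmult (ginv y) x) \<partial>M)"
  proof (rule Bochner_Integration.integral_cong[OF refl])
    fix y show "g y * cnj (voice ip rep u (rep x u) y) = g y * K (gmult (ginv y) x)"
      using K_swap[of y x] by (simp add: voice_rep)
  qed
  finally show "ext_voice rep u (T g) x = conv M gmult ginv g K x" by (simp add: conv_def)
qed

lemma T_Co:
  assumes r: "r > 1" and n: "nice g"
  shows "T g \<in> Co M w smul ip rep u r m"
proof -
  obtain C N where g: "g \<in> borel_measurable M" and C: "compact C" and N: "N \<ge> 0"
    and bd1: "\<And>y. cmod (g y) \<le> N * indicator C y" and bd2: "\<And>y. m y * cmod (g y) \<le> N * indicator C y"
    using n unfolding nice_def by blast
  show ?thesis unfolding Co_def
    using T_dual[OF g C N bd1] young[OF r g C N bd2] by (simp add: T_ext_voice)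
qed

end


lemma fin_supp:
  fixes h :: "'i \<Rightarrow> real"
  assumes F: "finite F" "F \<subseteq> I" and z: "\<And>i. i \<in> I \<Longrightarrow> i \<notin> F \<Longrightarrow> h i = 0"
  shows "h summable_on I" "infsum h I = sum h F"
proof -
  have "h summable_on F \<longleftrightarrow> h summable_on I"
    by (rule summable_on_cong_neutral) (use z F in auto)
  then show "h summable_on I" using F by simp
  have "infsum h F = infsum h I"
    by (rule infsum_cong_neutral) (use z F in auto)
  then show "infsum h I = sum h F" using F by simp
qed

context csm
begin

lemma embed_zero: "embed M w ip rep u (smul 0 x) = (\<lambda>v. 0)"
  by (auto simp: embed_def smul_zero ip_zero_left)

lemma embed_rep: "embed M w ip rep u (smul a (rep x u)) (rep y u) = a * K (gmult (ginv x) y)"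
  using rep_in_Sw[of y] by (simp add: embed_def ip_smul_left ip_rep kernel_def)

lemma fin_bound:
  fixes S :: "('i \<Rightarrow> complex) \<Rightarrow> 'b \<Rightarrow> complex" and xs :: "'i \<Rightarrow> 'a" and I :: "'i set"
  assumes r: "r > 1" and \<theta>: "\<forall>i\<in>I. 0 < \<theta> i" and n: "nice g"
    and Sconv: "\<forall>c. ellw I (r / (r - 1)) (\<lambda>i. inverse (\<theta> i)) c \<longrightarrow>
          S c \<in> Co M w smul ip rep u (r / (r - 1)) (\<lambda>x. inverse (m x)) \<and>
          ((\<lambda>F. Co_norm M rep u (r / (r - 1)) (\<lambda>x. inverse (m x))
                  (\<lambda>v. (\<Sum>i\<in>F. embed M w ip rep u (smul (c i) (rep (xs i) u)) v) - S c v))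
             \<longlongrightarrow> 0) (finite_subsets_at_top I)"
    and Sbd: "\<forall>c. ellw I (r / (r - 1)) (\<lambda>i. inverse (\<theta> i)) c \<longrightarrow>
          Co_norm M rep u (r / (r - 1)) (\<lambda>x. inverse (m x)) (S c)
            \<le> D * ellw_norm I (r / (r - 1)) (\<lambda>i. inverse (\<theta> i)) c"
    and D: "D \<ge> 0"
    and F: "finite F" "F \<subseteq> I"
  shows "(\<Sum>i\<in>F. (\<theta> i * cmod (conv M gmult ginv g K (xs i))) powr r)
           \<le> (D * Lpw_norm M r m g) powr r"
proof -
  define q where "q = r / (r - 1)"
  have q1: "q > 1" and rq: "1 / r + 1 / q = 1" and rq2: "(r - 1) * q = r"
    using conj_exp[OF r] by (auto simp: q_def)
  define a where "a i = conv M gmult ginv g K (xs i)" for i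
  define P where "P = (\<Sum>i\<in>F. (\<theta> i * cmod (a i)) powr r)"
  have P0: "P \<ge> 0" unfolding P_def by (intro sum_nonneg) simp
  obtain C N where gm: "g \<in> borel_measurable M" and C: "compact C" and N: "N \<ge> 0"
    and bd2: "\<And>y. m y * cmod (g y) \<le> N * indicator C y"
    using n unfolding nice_def by blast
  have gL: "Lpw M r m g" using nice_Lpw[OF r gm C N bd2] .
  define ng where "ng = Lpw_norm M r m g"
  have ng0: "ng \<ge> 0" by (simp add: ng_def Lpw_norm_nonneg)
  show ?thesis
  proof (cases "P = 0")
    case True
    then show ?thesis by (simp add: P_def a_def)
  next
    case False
    then have Ppos: "P > 0" using P0 by simp
    define c where "c i = (if i \<in> F \<and> a i \<noteq> 0
        then complex_of_real (\<theta> i powr r * cmod (a i) powr (r - 1) / cmod (a i)) * a i else 0)" for i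
    have ca: "cnj (c i) * a i = complex_of_real ((\<theta> i * cmod (a i)) powr r)" if "i \<in> F" for i
    proof (cases "a i = 0")
      case True then show ?thesis using r by (simp add: c_def)
    next
      case False
      have th: "\<theta> i > 0" using \<theta> F that by auto
      have "cnj (c i) * a i = complex_of_real (\<theta> i powr r * cmod (a i) powr (r - 1) / cmod (a i)) * (cnj (a i) * a i)"
        using that False by (simp add: c_def mult_ac)
      also have "cnj (a i) * a i = complex_of_real (cmod (a i) * cmod (a i))"
        using complex_norm_square[of "a i"] by (simp add: power2_eq_square mult.commute)
      also have "complex_of_real (\<theta> i powr r * cmod (a i) powr (r - 1) / cmod (a i)) * complex_of_real (cmod (a i) * cmod (a i))
          = complex_of_real (\<theta> i powr r * (cmod (a i) powr (r - 1) * cmod (a i)))"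
        using False by (simp add: field_simps)
      also have "cmod (a i) powr (r - 1) * cmod (a i) = cmod (a i) powr r"
        using False by (simp add: powr_add[symmetric] powr_diff)
      also have "\<theta> i powr r * cmod (a i) powr r = (\<theta> i * cmod (a i)) powr r"
        by (simp add: powr_mult)
      finally show ?thesis .
    qed
    have cnorm: "(inverse (\<theta> i) * cmod (c i)) powr q = (if i \<in> F then (\<theta> i * cmod (a i)) powr r else 0)"
      if "i \<in> I" for i
    proof (cases "i \<in> F \<and> a i \<noteq> 0")
      case False then show ?thesis using r by (auto simp: c_def)
    next
      case True
      have th: "\<theta> i > 0" using \<theta> that by auto
      have "cmod (c i) = \<bar>\<theta> i powr r * cmod (a i) powr (r - 1) / cmod (a i)\<bar> * cmod (a i)"
        by (simp only: c_def if_P[OF True] norm_mult norm_of_real)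
      also have "\<dots> = \<theta> i powr r * cmod (a i) powr (r - 1)"
        using True by simp
      finally have "cmod (c i) = \<theta> i powr r * cmod (a i) powr (r - 1)" .
      then have "inverse (\<theta> i) * cmod (c i) = \<theta> i powr (r - 1) * cmod (a i) powr (r - 1)"
        using th by (simp add: powr_diff field_simps)
      also have "\<dots> = (\<theta> i * cmod (a i)) powr (r - 1)" by (simp add: powr_mult)
      finally have "(inverse (\<theta> i) * cmod (c i)) powr q = ((\<theta> i * cmod (a i)) powr (r - 1)) powr q" by simp
      also have "\<dots> = (\<theta> i * cmod (a i)) powr r" using rq2 by (simp add: powr_powr)
      finally show ?thesis using True by simp
    qed
    have csum: "(\<lambda>i. (inverse (\<theta> i) * cmod (c i)) powr q) summable_on I"
      "infsum (\<lambda>i. (inverse (\<theta> i) * cmod (c i)) powr q) I = P"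
    proof -
      have z: "\<And>i. i \<in> I \<Longrightarrow> i \<notin> F \<Longrightarrow> (inverse (\<theta> i) * cmod (c i)) powr q = 0"
        using cnorm by simp
      show "(\<lambda>i. (inverse (\<theta> i) * cmod (c i)) powr q) summable_on I" using fin_supp(1)[OF F z] .
      have "infsum (\<lambda>i. (inverse (\<theta> i) * cmod (c i)) powr q) I = (\<Sum>i\<in>F. (inverse (\<theta> i) * cmod (c i)) powr q)"
        using fin_supp(2)[OF F z] .
      also have "\<dots> = P" unfolding P_def using cnorm F by (intro sum.cong) auto
      finally show "infsum (\<lambda>i. (inverse (\<theta> i) * cmod (c i)) powr q) I = P" .
    qed
    have cell: "ellw I q (\<lambda>i. inverse (\<theta> i)) c" using csum(1) by (simp add: ellw_def)
    have cnorm_eq: "ellw_norm I q (\<lambda>i. inverse (\<theta> i)) c = P powr (1 / q)"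
      using csum(2) by (simp add: ellw_norm_def)
    have SCo: "S c \<in> Co M w smul ip rep u q (\<lambda>x. inverse (m x))" using Sconv cell unfolding q_def by blast
    have lim: "((\<lambda>F'. Co_norm M rep u q (\<lambda>x. inverse (m x))
                  (\<lambda>v. (\<Sum>i\<in>F'. embed M w ip rep u (smul (c i) (rep (xs i) u)) v) - S c v))
             \<longlongrightarrow> 0) (finite_subsets_at_top I)" using Sconv cell unfolding q_def by blast
    have SB0: "Co_norm M rep u q (\<lambda>x. inverse (m x)) (S c) \<le> D * ellw_norm I q (\<lambda>i. inverse (\<theta> i)) c"
      using Sbd cell unfolding q_def by blast
    then have SB: "Co_norm M rep u q (\<lambda>x. inverse (m x)) (S c) \<le> D * P powr (1 / q)"
      unfolding cnorm_eq .
    define \<Phi> where "\<Phi> F' = (\<lambda>v. (\<Sum>i\<in>F'. embed M w ip rep u (smul (c i) (rep (xs i) u)) v) - S c v)" for F'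
    have ev: "eventually (\<lambda>F'. \<Phi> F' = \<Phi> F) (finite_subsets_at_top I)"
      unfolding eventually_finite_subsets_at_top
    proof (intro exI[of _ F] conjI allI impI)
      fix Y assume Y: "finite Y \<and> F \<subseteq> Y \<and> Y \<subseteq> I"
      have "(\<Sum>i\<in>Y. embed M w ip rep u (smul (c i) (rep (xs i) u)) v)
          = (\<Sum>i\<in>F. embed M w ip rep u (smul (c i) (rep (xs i) u)) v)" for v
      proof (rule sum.mono_neutral_right)
        show "\<forall>i\<in>Y - F. embed M w ip rep u (smul (c i) (rep (xs i) u)) v = 0"
          by (auto simp: c_def embed_zero)
      qed (use Y in auto)
      then show "\<Phi> Y = \<Phi> F" by (simp add: \<Phi>_def)
    qed (use F in auto)
    have "((\<lambda>F'. Co_norm M rep u q (\<lambda>x. inverse (m x)) (\<Phi> F')) \<longlongrightarrow> Co_norm M rep u q (\<lambda>x. inverse (m x)) (\<Phi> F)) (finite_subsets_at_top I)"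
      by (rule tendsto_eventually) (use ev in \<open>auto elim: eventually_mono\<close>)
    moreover have "((\<lambda>F'. Co_norm M rep u q (\<lambda>x. inverse (m x)) (\<Phi> F')) \<longlongrightarrow> 0) (finite_subsets_at_top I)"
      using lim by (simp add: \<Phi>_def)
    ultimately have Phi0: "Co_norm M rep u q (\<lambda>x. inverse (m x)) (\<Phi> F) = 0"
      using tendsto_unique finite_subsets_at_top_neq_bot by blast
    define E where "E = ext_voice rep u (S c)"
    define G where "G y = (\<Sum>i\<in>F. c i * K (gmult (ginv (xs i)) y))" for y
    have EL: "Lpw M q (\<lambda>x. inverse (m x)) E" using SCo by (simp add: Co_def E_def)
    have mi: "\<And>x. 0 \<le> inverse (m x)" using m_props(2) by (simp add: less_imp_le)
    have GL: "Lpw M q (\<lambda>x. inverse (m x)) G"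
      unfolding G_def using q1
      by (intro Lpw_sum Lpw_cmult K_shift_minv(1) mi minv_meas) auto
    have PhiV: "ext_voice rep u (\<Phi> F) = (\<lambda>y. G y - E y)"
      by (auto simp: \<Phi>_def ext_voice_def G_def E_def embed_rep)
    have GE0: "Lpw_norm M q (\<lambda>x. inverse (m x)) (\<lambda>y. G y - E y) = 0"
      using Phi0 PhiV by (simp add: Co_norm_def)
    have GEL: "Lpw M q (\<lambda>x. inverse (m x)) (\<lambda>y. G y - E y)"
      using GL EL mi q1 by (intro Lpw_diff minv_meas) auto
    have mp: "\<And>x. 0 < m x" using m_props(2) .
    note HE = holder_w[OF r q1 rq mp m_meas gL cnj_Lpw(1)[OF EL]]
    note HGE = holder_w[OF r q1 rq mp m_meas gL cnj_Lpw(1)[OF GEL]]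
    have ai: "a i = (\<integral>y. g y * cnj (K (gmult (ginv (xs i)) y)) \<partial>M)" for i
    proof -
      have "a i = (\<integral>y. g y * K (gmult (ginv y) (xs i)) \<partial>M)" by (simp add: a_def conv_def)
      also have "\<dots> = (\<integral>y. g y * cnj (K (gmult (ginv (xs i)) y)) \<partial>M)"
      proof (rule Bochner_Integration.integral_cong[OF refl])
        fix y show "g y * K (gmult (ginv y) (xs i)) = g y * cnj (K (gmult (ginv (xs i)) y))"
          using K_swap[of y "xs i"] by simp
      qed
      finally show ?thesis .
    qed
    have ii: "integrable M (\<lambda>y. g y * cnj (K (gmult (ginv (xs i)) y)))" for i
    proof -
      have "integrable M (\<lambda>y. g y * K (gmult (ginv y) (xs i)))" using conv_integrable(1)[OF r gL] .
      moreover have "(\<lambda>y. g y * K (gmult (ginv y) (xs i))) = (\<lambda>y. g y * cnj (K (gmult (ginv (xs i)) y)))"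
      proof
        fix y show "g y * K (gmult (ginv y) (xs i)) = g y * cnj (K (gmult (ginv (xs i)) y))"
          using K_swap[of y "xs i"] by simp
      qed
      ultimately show ?thesis by simp
    qed
    have "(\<Sum>i\<in>F. cnj (c i) * a i) = (\<Sum>i\<in>F. (\<integral>y. cnj (c i) * (g y * cnj (K (gmult (ginv (xs i)) y))) \<partial>M))"
      by (simp add: ai)
    also have "\<dots> = (\<integral>y. (\<Sum>i\<in>F. cnj (c i) * (g y * cnj (K (gmult (ginv (xs i)) y)))) \<partial>M)"
    proof -
      have "integrable M (\<lambda>y. cnj (c i) * (g y * cnj (K (gmult (ginv (xs i)) y))))" for i
        using ii[of i] by (rule Bochner_Integration.integrable_mult_right)
      then show ?thesis
        using Bochner_Integration.integral_sum[where I=F and M=M and f="\<lambda>i y. cnj (c i) * (g y * cnj (K (gmult (ginv (xs i)) y)))"] by simp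
    qed
    also have "\<dots> = (\<integral>y. g y * cnj (G y) \<partial>M)"
      by (simp add: G_def sum_distrib_left mult_ac)
    also have "\<dots> = (\<integral>y. g y * cnj (E y) + g y * cnj (G y - E y) \<partial>M)"
      by (simp add: algebra_simps)
    also have "\<dots> = (\<integral>y. g y * cnj (E y) \<partial>M) + (\<integral>y. g y * cnj (G y - E y) \<partial>M)"
      using HE(1) HGE(1) by (simp add: integral_add)
    finally have key: "(\<Sum>i\<in>F. cnj (c i) * a i) = (\<integral>y. g y * cnj (E y) \<partial>M) + (\<integral>y. g y * cnj (G y - E y) \<partial>M)" .
    have b1: "cmod (\<integral>y. g y * cnj (E y) \<partial>M) \<le> ng * (D * P powr (1 / q))"
    proof -
      have "cmod (\<integral>y. g y * cnj (E y) \<partial>M) \<le> ng * Lpw_norm M q (\<lambda>x. inverse (m x)) E"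
        using HE(3) by (simp add: ng_def cnj_Lpw(2))
      also have "\<dots> \<le> ng * (D * P powr (1 / q))"
        using SB ng0 by (intro mult_left_mono) (auto simp: Co_norm_def E_def)
      finally show ?thesis .
    qed
    have b2: "cmod (\<integral>y. g y * cnj (G y - E y) \<partial>M) \<le> 0"
    proof -
      have "cmod (\<integral>y. g y * cnj (G y - E y) \<partial>M)
          \<le> Lpw_norm M r m g * Lpw_norm M q (\<lambda>x. inverse (m x)) (\<lambda>y. cnj (G y - E y))"
        by (rule HGE(3))
      also have "\<dots> = 0" by (simp only: cnj_Lpw(2) GE0 mult_zero_right)
      finally show ?thesis .
    qed
    have "P = cmod (\<Sum>i\<in>F. cnj (c i) * a i)"
    proof -
      have "(\<Sum>i\<in>F. cnj (c i) * a i) = complex_of_real P"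
        unfolding P_def using ca by simp
      then show ?thesis using P0 by simp
    qed
    also have "\<dots> \<le> ng * (D * P powr (1 / q))"
      using key b1 b2 norm_triangle_ineq[of "\<integral>y. g y * cnj (E y) \<partial>M" "\<integral>y. g y * cnj (G y - E y) \<partial>M"]
      by simp
    finally have Pb: "P \<le> ng * D * P powr (1 / q)" by (simp add: mult_ac)
    have "1 / r = 1 - 1 / q" using rq by simp
    then have "P powr (1 / r) = P powr 1 / P powr (1 / q)" by (simp add: powr_diff)
    also have "\<dots> = P / P powr (1 / q)" using Ppos by simp
    finally have "P powr (1 / r) = P / P powr (1 / q)" .
    also have "\<dots> \<le> ng * D" using Pb Ppos by (simp add: divide_le_eq)
    finally have "P powr (1 / r) \<le> ng * D" .
    then have "(P powr (1 / r)) powr r \<le> (ng * D) powr r"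
      using Ppos r by (intro powr_mono2) auto
    then show ?thesis using Ppos r by (simp add: powr_powr P_def a_def ng_def mult.commute)
  qed
qed

end


context csm
begin

lemma nice_bound:
  fixes S :: "('i \<Rightarrow> complex) \<Rightarrow> 'b \<Rightarrow> complex" and xs :: "'i \<Rightarrow> 'a" and I :: "'i set"
  assumes r: "r > 1" and \<theta>: "\<forall>i\<in>I. 0 < \<theta> i" and n: "nice g"
    and c0: "c0 > 0"
    and frame: "\<forall>\<phi>\<in>Co M w smul ip rep u r m.
          ellw I r \<theta> (\<lambda>i. \<phi> (rep (xs i) u)) \<and>
          c0 * Co_norm M rep u r m \<phi> \<le> ellw_norm I r \<theta> (\<lambda>i. \<phi> (rep (xs i) u))"
    and Sconv: "\<forall>c. ellw I (r / (r - 1)) (\<lambda>i. inverse (\<theta> i)) c \<longrightarrow>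
          S c \<in> Co M w smul ip rep u (r / (r - 1)) (\<lambda>x. inverse (m x)) \<and>
          ((\<lambda>F. Co_norm M rep u (r / (r - 1)) (\<lambda>x. inverse (m x))
                  (\<lambda>v. (\<Sum>i\<in>F. embed M w ip rep u (smul (c i) (rep (xs i) u)) v) - S c v))
             \<longlongrightarrow> 0) (finite_subsets_at_top I)"
    and Sbd: "\<forall>c. ellw I (r / (r - 1)) (\<lambda>i. inverse (\<theta> i)) c \<longrightarrow>
          Co_norm M rep u (r / (r - 1)) (\<lambda>x. inverse (m x)) (S c)
            \<le> D * ellw_norm I (r / (r - 1)) (\<lambda>i. inverse (\<theta> i)) c"
    and D: "D \<ge> 0"
  shows "Lpw_norm M r m (conv M gmult ginv g K) \<le> D / c0 * Lpw_norm M r m g"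
proof -
  define ng where "ng = Lpw_norm M r m g"
  have ng0: "ng \<ge> 0" by (simp add: ng_def Lpw_norm_nonneg)
  have TC: "T g \<in> Co M w smul ip rep u r m" using T_Co[OF r n] .
  have Trep: "T g (rep x u) = conv M gmult ginv g K x" for x
    using fun_cong[OF T_ext_voice[of g], of x] by (simp add: ext_voice_def)
  have fr: "ellw I r \<theta> (\<lambda>i. conv M gmult ginv g K (xs i))"
    "c0 * Lpw_norm M r m (conv M gmult ginv g K) \<le> ellw_norm I r \<theta> (\<lambda>i. conv M gmult ginv g K (xs i))"
    using frame TC by (auto simp: Trep Co_norm_def T_ext_voice)
  have "infsum (\<lambda>i. (\<theta> i * cmod (conv M gmult ginv g K (xs i))) powr r) I \<le> (D * ng) powr r"
  proof (rule infsum_le_finite_sums)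
    show "(\<lambda>i. (\<theta> i * cmod (conv M gmult ginv g K (xs i))) powr r) summable_on I"
      using fr(1) by (simp add: ellw_def)
    fix F assume "finite F" "F \<subseteq> I"
    then show "(\<Sum>i\<in>F. (\<theta> i * cmod (conv M gmult ginv g K (xs i))) powr r) \<le> (D * ng) powr r"
      unfolding ng_def by (rule fin_bound[OF r \<theta> n Sconv Sbd D])
  qed
  then have "ellw_norm I r \<theta> (\<lambda>i. conv M gmult ginv g K (xs i)) \<le> ((D * ng) powr r) powr (1 / r)"
    unfolding ellw_norm_def using r
    by (intro powr_mono2) (auto intro!: infsum_nonneg)
  also have "\<dots> = D * ng" using r D ng0 by (simp add: powr_powr)
  finally have "c0 * Lpw_norm M r m (conv M gmult ginv g K) \<le> D * ng" using fr(2) by linarith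
  then show ?thesis using c0 by (simp add: field_simps ng_def)
qed

end


context csm
begin

lemma final_step:
  assumes r: "r > 1" and f: "Lpw M r m f" and B: "B \<ge> 0"
    and nb: "\<And>g. nice g \<Longrightarrow> Lpw_norm M r m (conv M gmult ginv g K) \<le> B * Lpw_norm M r m g"
  shows "(AE x in M. integrable M (\<lambda>y. f y * K (gmult (ginv y) x))) \<and>
           Lpw M r m (conv M gmult ginv f K) \<and>
           Lpw_norm M r m (conv M gmult ginv f K) \<le> B * Lpw_norm M r m f"
proof -
  have fm: "f \<in> borel_measurable M" using f by (simp add: Lpw_def)
  obtain Cs :: "nat \<Rightarrow> 'a set" where Cs: "\<And>n. compact (Cs n)" "incseq Cs" "(\<Union>n. Cs n) = UNIV"
    using exhaustion by blast
  define E where "E n = Cs n \<inter> {y. cmod (f y) \<le> real n} \<inter> {y. m y \<le> real n}" for n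
  have ES: "E n \<in> sets M" for n
  proof -
    have "Cs n \<in> sets M" using compact_sets[OF Cs(1)] .
    moreover have "{y \<in> space M. cmod (f y) \<le> real n} \<in> sets M" using fm by measurable
    moreover have "{y \<in> space M. m y \<le> real n} \<in> sets M" by measurable
    ultimately show ?thesis unfolding E_def by (simp add: space_M Int_assoc sets.Int)
  qed
  define fn where "fn n y = indicator (E n) y * f y" for n y
  have fnm: "fn n \<in> borel_measurable M" for n
    unfolding fn_def using ES[of n] fm by measurable
  have fn_le: "cmod (fn n y) \<le> cmod (f y)" for n y
    by (simp add: fn_def norm_mult split: split_indicator)
  have fn_nice: "nice (fn n)" for n
    unfolding nice_def
  proof (intro conjI exI[of _ "Cs n"] exI[of _ "real n * real n + real n"] allI)
    show "fn n \<in> borel_measurable M" by (rule fnm)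
    show "compact (Cs n)" by (rule Cs(1))
    show "0 \<le> real n * real n + real n" by simp
    fix y
    show "cmod (fn n y) \<le> (real n * real n + real n) * indicator (Cs n) y"
    proof (cases "y \<in> E n")
      case True
      then have a: "cmod (f y) \<le> real n" "y \<in> Cs n" by (auto simp: E_def)
      have "cmod (f y) \<le> real n * real n + real n" using a(1) by (simp add: add_increasing)
      then show ?thesis using True a by (simp add: fn_def)
    qed (simp add: fn_def)
    show "m y * cmod (fn n y) \<le> (real n * real n + real n) * indicator (Cs n) y"
    proof (cases "y \<in> E n")
      case True
      then have a: "cmod (f y) \<le> real n" "y \<in> Cs n" "m y \<le> real n" by (auto simp: E_def)
      have "m y * cmod (f y) \<le> real n * real n"
        using a m_props(2)[of y] by (intro mult_mono) auto
      then show ?thesis using True a by (simp add: fn_def)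
    qed (simp add: fn_def)
  qed
  define R where "R = B * Lpw_norm M r m f"
  have R0: "R \<ge> 0" using B by (simp add: R_def Lpw_norm_nonneg)
  have fnL: "Lpw M r m (conv M gmult ginv (fn n) K)" for n
  proof -
    obtain C N where g: "fn n \<in> borel_measurable M" and C: "compact C" and N: "N \<ge> 0"
      and bd2: "\<And>y. m y * cmod (fn n y) \<le> N * indicator C y"
      using fn_nice[of n] unfolding nice_def by blast
    show ?thesis using young[OF r g C N bd2] .
  qed
  have fnb: "Lpw_norm M r m (conv M gmult ginv (fn n) K) \<le> R" for n
  proof -
    have "Lpw_norm M r m (fn n) \<le> Lpw_norm M r m f"
      using Lpw_mono(2)[OF f fnm fn_le] m_props(2) r m_meas by (simp add: less_imp_le)
    then show ?thesis using nb[OF fn_nice[of n]] B unfolding R_def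
      by (meson mult_left_mono order_trans)
  qed
  define U where "U n = (\<lambda>x. (m x * cmod (conv M gmult ginv (fn n) K x)) powr r)" for n
  define V where "V = (\<lambda>x. (m x * cmod (conv M gmult ginv f K x)) powr r)"
  have Um: "U n \<in> borel_measurable M" for n
    unfolding U_def using conv_meas[OF fnm[of n]] by measurable
  have Vm: "V \<in> borel_measurable M"
    unfolding V_def using conv_meas[OF fm] by measurable
  have Uint: "(\<integral>\<^sup>+x. ennreal (U n x) \<partial>M) \<le> ennreal (R powr r)" for n
  proof -
    have ui: "integrable M (U n)" using fnL[of n] by (simp add: Lpw_def U_def)
    have "(\<integral>\<^sup>+x. ennreal (U n x) \<partial>M) = ennreal (\<integral>x. U n x \<partial>M)"
      using ui by (intro nn_integral_eq_integral) (auto simp: U_def)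
    also have "(\<integral>x. U n x \<partial>M) = (Lpw_norm M r m (conv M gmult ginv (fn n) K)) powr r"
    proof -
      have "(\<integral>x. U n x \<partial>M) \<ge> 0" by (intro integral_nonneg_AE) (auto simp: U_def)
      then show ?thesis using r by (simp add: Lpw_norm_def U_def powr_powr)
    qed
    also have "\<dots> \<le> R powr r" using fnb[of n] r by (intro powr_mono2) (auto simp: Lpw_norm_nonneg)
    finally show ?thesis by (simp add: ennreal_leI)
  qed
  have conv_lim: "(\<lambda>n. conv M gmult ginv (fn n) K x) \<longlonglongrightarrow> conv M gmult ginv f K x" for x
  proof -
    have km: "(\<lambda>y. K (gmult (ginv y) x)) \<in> borel_measurable M" by measurable
    have wi: "integrable M (\<lambda>y. cmod (f y * K (gmult (ginv y) x)))"
      using conv_integrable(1)[OF r f, of x] by simp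
    have lim: "(\<lambda>n. fn n y * K (gmult (ginv y) x)) \<longlonglongrightarrow> f y * K (gmult (ginv y) x)" for y
    proof (rule tendsto_eventually)
      obtain n0 where n0: "y \<in> Cs n0" using Cs(3) by blast
      define N0 where "N0 = max n0 (max (nat \<lceil>cmod (f y)\<rceil>) (nat \<lceil>m y\<rceil>))"
      have "\<forall>n\<ge>N0. fn n y * K (gmult (ginv y) x) = f y * K (gmult (ginv y) x)"
      proof (intro allI impI)
        fix n assume n: "N0 \<le> n"
        have "y \<in> Cs n" using n0 Cs(2) n unfolding N0_def incseq_def by auto
        moreover have "cmod (f y) \<le> real n"
        proof -
          have "nat \<lceil>cmod (f y)\<rceil> \<le> n" using n by (simp add: N0_def)
          then have "real (nat \<lceil>cmod (f y)\<rceil>) \<le> real n" by (simp only: of_nat_le_iff)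
          then show ?thesis using real_nat_ceiling_ge[of "cmod (f y)"] by linarith
        qed
        moreover have "m y \<le> real n"
        proof -
          have "nat \<lceil>m y\<rceil> \<le> n" using n by (simp add: N0_def)
          then have "real (nat \<lceil>m y\<rceil>) \<le> real n" by (simp only: of_nat_le_iff)
          then show ?thesis using real_nat_ceiling_ge[of "m y"] by linarith
        qed
        ultimately have "y \<in> E n" by (simp add: E_def)
        then show "fn n y * K (gmult (ginv y) x) = f y * K (gmult (ginv y) x)" by (simp add: fn_def)
      qed
      then show "\<forall>\<^sub>F n in sequentially. fn n y * K (gmult (ginv y) x) = f y * K (gmult (ginv y) x)"
        using eventually_sequentially by blast
    qed
    have "(\<lambda>n. \<integral>y. fn n y * K (gmult (ginv y) x) \<partial>M) \<longlonglongrightarrow> (\<integral>y. f y * K (gmult (ginv y) x) \<partial>M)"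
    proof (rule integral_dominated_convergence[OF _ _ wi])
      show "(\<lambda>y. f y * K (gmult (ginv y) x)) \<in> borel_measurable M" using fm km by (rule borel_measurable_times)
      show "(\<lambda>y. fn n y * K (gmult (ginv y) x)) \<in> borel_measurable M" for n
        using fnm[of n] km by (rule borel_measurable_times)
      show "AE y in M. (\<lambda>n. fn n y * K (gmult (ginv y) x)) \<longlonglongrightarrow> f y * K (gmult (ginv y) x)"
        using lim by simp
      show "AE y in M. norm (fn n y * K (gmult (ginv y) x)) \<le> cmod (f y * K (gmult (ginv y) x))" for n
        using fn_le by (intro AE_I2) (simp add: norm_mult mult_right_mono)
    qed
    then show ?thesis by (simp add: conv_def)
  qed
  have Ulim: "(\<lambda>n. ennreal (U n x)) \<longlonglongrightarrow> ennreal (V x)" for x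
  proof -
    have ev: "\<forall>\<^sub>F n in sequentially. 0 \<le> m x * cmod (conv M gmult ginv (fn n) K x)"
      using m_props(2)[of x] by (intro always_eventually allI) simp
    have "(\<lambda>n. U n x) \<longlonglongrightarrow> V x"
      unfolding U_def V_def using r ev
      by (intro tendsto_powr' tendsto_mult tendsto_const tendsto_norm conv_lim) auto
    then show ?thesis by (rule tendsto_ennrealI)
  qed
  have "(\<integral>\<^sup>+x. ennreal (V x) \<partial>M) = (\<integral>\<^sup>+x. liminf (\<lambda>n. ennreal (U n x)) \<partial>M)"
    by (intro nn_integral_cong) (simp add: lim_imp_Liminf[OF _ Ulim])
  also have "\<dots> \<le> liminf (\<lambda>n. \<integral>\<^sup>+x. ennreal (U n x) \<partial>M)"
    by (rule nn_integral_liminf) (use Um in measurable)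
  also have "\<dots> \<le> limsup (\<lambda>n. \<integral>\<^sup>+x. ennreal (U n x) \<partial>M)"
    by (rule Liminf_le_Limsup) simp
  also have "\<dots> \<le> ennreal (R powr r)"
    by (rule Limsup_bounded) (use Uint in simp)
  finally have Vnn: "(\<integral>\<^sup>+x. ennreal (V x) \<partial>M) \<le> ennreal (R powr r)" .
  have Vint: "integrable M V"
    using Vm Vnn by (intro integrableI_nonneg) (auto simp: V_def top.not_eq_extremum intro: le_less_trans)
  have "ennreal (\<integral>x. V x \<partial>M) = (\<integral>\<^sup>+x. ennreal (V x) \<partial>M)"
    using Vint by (intro nn_integral_eq_integral[symmetric]) (auto simp: V_def)
  then have "ennreal (\<integral>x. V x \<partial>M) \<le> ennreal (R powr r)" using Vnn by simp
  then have Vle: "(\<integral>x. V x \<partial>M) \<le> R powr r" by (simp add: ennreal_le_iff)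
  have LV: "Lpw M r m (conv M gmult ginv f K)"
    using conv_meas[OF fm] Vint by (simp add: Lpw_def V_def)
  have "Lpw_norm M r m (conv M gmult ginv f K) = (\<integral>x. V x \<partial>M) powr (1 / r)"
    by (simp add: Lpw_norm_def V_def)
  also have "\<dots> \<le> (R powr r) powr (1 / r)"
    using Vle r by (intro powr_mono2) (auto intro!: integral_nonneg_AE simp: V_def)
  also have "\<dots> = R" using R0 r by (simp add: powr_powr)
  finally have "Lpw_norm M r m (conv M gmult ginv f K) \<le> R" .
  moreover have "AE x in M. integrable M (\<lambda>y. f y * K (gmult (ginv y) x))"
    using conv_integrable(1)[OF r f] by simp
  ultimately show ?thesis using LV by (simp add: R_def)
qed

end


theorem mainTheorem1:
  fixes gmult :: "'g::{t2_space,second_countable_topology} \<Rightarrow> 'g \<Rightarrow> 'g"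
    and ginv :: "'g \<Rightarrow> 'g" and e :: 'g and M :: "'g measure" and w :: "'g \<Rightarrow> real"
    and smul :: "complex \<Rightarrow> 'h::{real_normed_vector,banach} \<Rightarrow> 'h"
    and ip :: "'h \<Rightarrow> 'h \<Rightarrow> complex" and rep :: "'g \<Rightarrow> 'h \<Rightarrow> 'h" and u :: 'h
    and r :: real and m :: "'g \<Rightarrow> real"
    and I :: "'i set" and xs :: "'i \<Rightarrow> 'g" and \<theta> :: "'i \<Rightarrow> real"
  assumes setting: "coorbit_setting gmult ginv e M w smul ip rep u"
    and r: "1 < r"
    and m: "w_moderate gmult w m"
    and I: "countable I"
    and \<theta>: "\<forall>i\<in>I. 0 < \<theta> i"
    and frame: "\<exists>c C. 0 < c \<and> c \<le> C \<and>
       (\<forall>\<phi>\<in>Co M w smul ip rep u r m.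
          ellw I r \<theta> (\<lambda>i. \<phi> (rep (xs i) u)) \<and>
          c * Co_norm M rep u r m \<phi> \<le> ellw_norm I r \<theta> (\<lambda>i. \<phi> (rep (xs i) u)) \<and>
          ellw_norm I r \<theta> (\<lambda>i. \<phi> (rep (xs i) u)) \<le> C * Co_norm M rep u r m \<phi>)"
    and atomic: "\<exists>S :: ('i \<Rightarrow> complex) \<Rightarrow> ('h \<Rightarrow> complex).
       (\<forall>c. ellw I (r / (r - 1)) (\<lambda>i. inverse (\<theta> i)) c \<longrightarrow>
          S c \<in> Co M w smul ip rep u (r / (r - 1)) (\<lambda>x. inverse (m x)) \<and>
          ((\<lambda>F. Co_norm M rep u (r / (r - 1)) (\<lambda>x. inverse (m x))
                  (\<lambda>v. (\<Sum>i\<in>F. embed M w ip rep u (smul (c i) (rep (xs i) u)) v) - S c v))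
             \<longlongrightarrow> 0) (finite_subsets_at_top I)) \<and>
       (\<forall>c d a b. ellw I (r / (r - 1)) (\<lambda>i. inverse (\<theta> i)) c \<longrightarrow>
          ellw I (r / (r - 1)) (\<lambda>i. inverse (\<theta> i)) d \<longrightarrow>
          S (\<lambda>i. a * c i + b * d i) = (\<lambda>v. a * S c v + b * S d v)) \<and>
       (\<exists>D. \<forall>c. ellw I (r / (r - 1)) (\<lambda>i. inverse (\<theta> i)) c \<longrightarrow>
          Co_norm M rep u (r / (r - 1)) (\<lambda>x. inverse (m x)) (S c)
            \<le> D * ellw_norm I (r / (r - 1)) (\<lambda>i. inverse (\<theta> i)) c)"
  shows "\<exists>B\<ge>0. \<forall>f. Lpw M r m f \<longrightarrow>
           (AE x in M. integrable M (\<lambda>y. f y * kernel ip rep u (gmult (ginv y) x))) \<and>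
           Lpw M r m (conv M gmult ginv f (kernel ip rep u)) \<and>
           Lpw_norm M r m (conv M gmult ginv f (kernel ip rep u)) \<le> B * Lpw_norm M r m f"
proof -
  obtain c0 C0 where c0: "0 < c0" and fr: "\<forall>\<phi>\<in>Co M w smul ip rep u r m.
          ellw I r \<theta> (\<lambda>i. \<phi> (rep (xs i) u)) \<and>
          c0 * Co_norm M rep u r m \<phi> \<le> ellw_norm I r \<theta> (\<lambda>i. \<phi> (rep (xs i) u)) \<and>
          ellw_norm I r \<theta> (\<lambda>i. \<phi> (rep (xs i) u)) \<le> C0 * Co_norm M rep u r m \<phi>"
    using frame by blast
  obtain S :: "('i \<Rightarrow> complex) \<Rightarrow> ('h \<Rightarrow> complex)" where
    S1: "\<forall>c. ellw I (r / (r - 1)) (\<lambda>i. inverse (\<theta> i)) c \<longrightarrow>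
          S c \<in> Co M w smul ip rep u (r / (r - 1)) (\<lambda>x. inverse (m x)) \<and>
          ((\<lambda>F. Co_norm M rep u (r / (r - 1)) (\<lambda>x. inverse (m x))
                  (\<lambda>v. (\<Sum>i\<in>F. embed M w ip rep u (smul (c i) (rep (xs i) u)) v) - S c v))
             \<longlongrightarrow> 0) (finite_subsets_at_top I)"
    and S3: "\<exists>D. \<forall>c. ellw I (r / (r - 1)) (\<lambda>i. inverse (\<theta> i)) c \<longrightarrow>
          Co_norm M rep u (r / (r - 1)) (\<lambda>x. inverse (m x)) (S c)
            \<le> D * ellw_norm I (r / (r - 1)) (\<lambda>i. inverse (\<theta> i)) c"
    using atomic by blast
  obtain D where SD: "\<forall>c. ellw I (r / (r - 1)) (\<lambda>i. inverse (\<theta> i)) c \<longrightarrow>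
          Co_norm M rep u (r / (r - 1)) (\<lambda>x. inverse (m x)) (S c)
            \<le> D * ellw_norm I (r / (r - 1)) (\<lambda>i. inverse (\<theta> i)) c"
    using S3 by blast
  interpret X: csm gmult ginv e M w smul ip rep u m
    using setting m by (simp add: csm_def csm_axioms_def cs_def)
  define D' where "D' = max D 0"
  have D'0: "D' \<ge> 0" by (simp add: D'_def)
  have SD': "\<forall>c. ellw I (r / (r - 1)) (\<lambda>i. inverse (\<theta> i)) c \<longrightarrow>
          Co_norm M rep u (r / (r - 1)) (\<lambda>x. inverse (m x)) (S c)
            \<le> D' * ellw_norm I (r / (r - 1)) (\<lambda>i. inverse (\<theta> i)) c"
  proof (intro allI impI)
    fix c assume c: "ellw I (r / (r - 1)) (\<lambda>i. inverse (\<theta> i)) c"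
    have "ellw_norm I (r / (r - 1)) (\<lambda>i. inverse (\<theta> i)) c \<ge> 0" by (simp add: ellw_norm_def)
    then have "D * ellw_norm I (r / (r - 1)) (\<lambda>i. inverse (\<theta> i)) c
        \<le> D' * ellw_norm I (r / (r - 1)) (\<lambda>i. inverse (\<theta> i)) c"
      by (intro mult_right_mono) (auto simp: D'_def)
    then show "Co_norm M rep u (r / (r - 1)) (\<lambda>x. inverse (m x)) (S c)
            \<le> D' * ellw_norm I (r / (r - 1)) (\<lambda>i. inverse (\<theta> i)) c"
      using SD c by (meson order_trans)
  qed
  have fr': "\<forall>\<phi>\<in>Co M w smul ip rep u r m.
          ellw I r \<theta> (\<lambda>i. \<phi> (rep (xs i) u)) \<and>
          c0 * Co_norm M rep u r m \<phi> \<le> ellw_norm I r \<theta> (\<lambda>i. \<phi> (rep (xs i) u))"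
    using fr by blast
  define B where "B = D' / c0"
  have B0: "B \<ge> 0" using D'0 c0 by (simp add: B_def)
  have nb: "Lpw_norm M r m (conv M gmult ginv g (kernel ip rep u)) \<le> B * Lpw_norm M r m g"
    if "X.nice g" for g
    unfolding B_def by (rule X.nice_bound[OF r \<theta> that c0 fr' S1 SD' D'0])
  show ?thesis
  proof (rule exI[of _ B], intro conjI[OF B0] allI impI)
    fix f assume "Lpw M r m f"
    then show "(AE x in M. integrable M (\<lambda>y. f y * kernel ip rep u (gmult (ginv y) x))) \<and>
           Lpw M r m (conv M gmult ginv f (kernel ip rep u)) \<and>
           Lpw_norm M r m (conv M gmult ginv f (kernel ip rep u)) \<le> B * Lpw_norm M r m f"
      by (rule X.final_step[OF r _ B0 nb])
  qed
qed


end
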